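(* Let $(\Lambda,d)$ be a $k$-graph and let $(\overline{\Lambda},\overline d)$ be the extension described in the context. Then $(\overline{\Lambda},\overline d)$ is a $k$-graph with no sources, i.e. $v\overline{\Lambda}^{n}\neq\emptyset$ for every vertex $v$ of $\overline{\Lambda}$ and every $n\in\mathbb{N}^k$.
   Context: A $k$-graph $(\Lambda,d)$ is a countable category with a degree functor $d:\Lambda\to\mathbb{N}^k$ satisfying unique factorization (if $d(\lambda)=m+n$ there are unique $\mu,\nu$ with $\lambda=\mu\nu$, $d(\mu)=m$, $d(\nu)=n$); $\Lambda^0$ vertices, $r,s$ range/source, $v\Lambda^n=\{\lambda:r(\lambda)=v,d(\lambda)=n\}$; a vertex $v$ is a source if $v\Lambda^n=\emptyset$ for some $n$. $e_i$ standard basis, $\le$ coordinatewise, $\vee,\wedge$ coordinatewise max/min. For $m\in(\mathbb{N}\cup\{\infty\})^k$, $\Omega_{k,m}$ has objects $\{p\in\mathbb{N}^k:p\le m\}$, morphisms $(p,q)$, $p\le q\le m$, $r(p,q)=p$, $s(p,q)=q$, $d(p,q)=q-p$. A graph morphism $x:\Omega_{k,m}\to\Lambda$ is a degree-preserving functor; $d(x)=m$, $x(a,b)=x((a,b))$, $x(a)=x(a,a)$. It is a boundary path if there is $n_x\in\mathbb{N}^k$, $n_x\le d(x)$, with $x(p)\Lambda^{e_i}=\emptyset$ whenever $p\in\mathbb{N}^k$, $n_x\le p\le d(x)$, $p_i=d(x)_i$; $\Lambda^{\le\infty}$ is the set of boundary paths. $\sigma^px(a,b)=x(a+p,b+p)$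 ($p\le d(x)$); $\lambda x$ is the concatenation of $\lambda$ (with $s(\lambda)=x(0)$) and $x$, a graph morphism on $\Omega_{k,d(\lambda)+d(x)}$. $V_\Lambda=\{(x;m):x\in\Lambda^{\le\infty},m\in\mathbb{N}^k,m\not\le d(x)\}$, $(x;m)\approx(y;p)$ iff $x(m\wedge d(x))=y(p\wedge d(y))$ and $m-m\wedge d(x)=p-p\wedge d(y)$; classes $[x;m]$ form $\widetilde{V_\Lambda}$. $P_\Lambda=\{(x;(m,n)):x\in\Lambda^{\le\infty},m\le n\in\mathbb{N}^k,n\not\le d(x)\}$, $(x;(m,n))\sim(y;(p,q))$ iff $x(m\wedge d(x),n\wedge d(x))=y(p\wedge d(y),q\wedge d(y))$, $m-m\wedge d(x)=p-p\wedge d(y)$, $n-m=q-p$; classes $[x;(m,n)]$ form $\widetilde{P_\Lambda}$. The extension $\overline{\Lambda}$ has objects $\Lambda^0\sqcup\widetilde{V_\Lambda}$ and morphisms $\Lambda\sqcup\widetilde{P_\Lambda}$: on $\Lambda$ everything is as in $\Lambda$; $\overline r([x;(m,n)])=x(m)$ if $m\le d(x)$, else $[x;m]$; $\overline s([x;(m,n)])=[x;n]$; identity at $[x;m]$ is $[x;(m,m)]$; $\lambda[x;(m,n)]=[\lambda\sigma^mx;(0,d(\lambda)+n-m)]$ when $s(\lambda)=\overline r([x;(m,n)])$; $[x;(m,n)][y;(p,q)]=[z;(m,n+q-p)]$ with $z=x(0,n\wedge d(x))\sigma^{p\wedge d(y)}y$ when $\overline s([x;(m,n)])=\overline r([y;(p,q)])$.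 The degree is $\overline d|_\Lambda=d$, $\overline d([x;(m,n)])=n-m$. *)

theory Defs
  imports Main "HOL-Library.Function_Algebras" "HOL-Library.Extended_Nat" "HOL-Library.Countable_Set"
begin

text \<open>Elements of N^k are functions 'k => nat (with 'k a finite type of k elements);
  pointwise order, pointwise +, -, sup (join), inf (meet).
  Elements of (N u {oo})^k are functions 'k => enat.\<close>

record ('v, 'a, 'k) kgraph =
  kobj :: "'v set"
  kmor :: "'a set"
  krg  :: "'a \<Rightarrow> 'v"
  ksr  :: "'a \<Rightarrow> 'v"
  kcp  :: "'a \<Rightarrow> 'a \<Rightarrow> 'a"
  kid  :: "'v \<Rightarrow> 'a"
  kdg  :: "'a \<Rightarrow> 'k \<Rightarrow> nat"

definition k_graph :: "('v, 'a, 'k) kgraph \<Rightarrow> bool" where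
  "k_graph G \<longleftrightarrow>
     countable (kobj G) \<and> countable (kmor G) \<and>
     (\<forall>a\<in>kmor G. krg G a \<in> kobj G \<and> ksr G a \<in> kobj G) \<and>
     (\<forall>v\<in>kobj G. kid G v \<in> kmor G \<and> krg G (kid G v) = v \<and> ksr G (kid G v) = v
                  \<and> kdg G (kid G v) = 0) \<and>
     (\<forall>a\<in>kmor G. \<forall>b\<in>kmor G. ksr G a = krg G b \<longrightarrow>
         kcp G a b \<in> kmor G \<and> krg G (kcp G a b) = krg G a \<and> ksr G (kcp G a b) = ksr G b
         \<and> kdg G (kcp G a b) = kdg G a + kdg G b) \<and>
     (\<forall>a\<in>kmor G. \<forall>b\<in>kmor G. \<forall>c\<in>kmor G. ksr G a = krg G b \<and> ksr G b = krg G c \<longrightarrow>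
         kcp G (kcp G a b) c = kcp G a (kcp G b c)) \<and>
     (\<forall>a\<in>kmor G. kcp G (kid G (krg G a)) a = a \<and> kcp G a (kid G (ksr G a)) = a) \<and>
     (\<forall>l\<in>kmor G. \<forall>m n. kdg G l = m + n \<longrightarrow>
         (\<exists>!p. p \<in> kmor G \<times> kmor G \<and> ksr G (fst p) = krg G (snd p)
               \<and> kcp G (fst p) (snd p) = l \<and> kdg G (fst p) = m \<and> kdg G (snd p) = n))"

definition e_vec :: "'k \<Rightarrow> 'k \<Rightarrow> nat" where
  "e_vec i = (\<lambda>j. if j = i then 1 else 0)"

definition le_en :: "('k \<Rightarrow> nat) \<Rightarrow> ('k \<Rightarrow> enat) \<Rightarrow> bool" where
  "le_en p m \<longleftrightarrow> (\<forall>i. enat (p i) \<le> m i)"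

definition meet_en :: "('k \<Rightarrow> nat) \<Rightarrow> ('k \<Rightarrow> enat) \<Rightarrow> 'k \<Rightarrow> nat" where
  "meet_en p m = (\<lambda>i. the_enat (min (enat (p i)) (m i)))"

text \<open>A graph morphism x : Omega_{k,m} -> Lambda is represented by the pair (m, x) where
  x p q is the image of the morphism (p,q) (values outside p \<le> q \<le> m are irrelevant).\<close>
type_synonym ('a, 'k) gmor = "('k \<Rightarrow> enat) \<times> (('k \<Rightarrow> nat) \<Rightarrow> ('k \<Rightarrow> nat) \<Rightarrow> 'a)"

definition vtx :: "('v, 'a, 'k) kgraph \<Rightarrow> (('k \<Rightarrow> nat) \<Rightarrow> ('k \<Rightarrow> nat) \<Rightarrow> 'a) \<Rightarrow> ('k \<Rightarrow> nat) \<Rightarrow> 'v" where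
  "vtx G x p = krg G (x p p)"

definition is_gm :: "('v, 'a, 'k) kgraph \<Rightarrow> ('a, 'k) gmor \<Rightarrow> bool" where
  "is_gm G y \<longleftrightarrow> (case y of (m, x) \<Rightarrow>
     (\<forall>p q. p \<le> q \<and> le_en q m \<longrightarrow> x p q \<in> kmor G \<and> kdg G (x p q) = q - p) \<and>
     (\<forall>p. le_en p m \<longrightarrow> x p p = kid G (krg G (x p p))) \<and>
     (\<forall>p q t. p \<le> q \<and> q \<le> t \<and> le_en t m \<longrightarrow>
         ksr G (x p q) = krg G (x q t) \<and> kcp G (x p q) (x q t) = x p t))"

definition is_bp :: "('v, 'a, 'k) kgraph \<Rightarrow> ('a, 'k) gmor \<Rightarrow> bool" where
  "is_bp G y \<longleftrightarrow> is_gm G y \<and> (case y of (m, x) \<Rightarrow>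
     (\<exists>nx. le_en nx m \<and>
        (\<forall>p i. nx \<le> p \<and> le_en p m \<and> enat (p i) = m i \<longrightarrow>
            \<not> (\<exists>l\<in>kmor G. krg G l = vtx G x p \<and> kdg G l = e_vec i))))"

definition V_set :: "('v, 'a, 'k) kgraph \<Rightarrow> (('a, 'k) gmor \<times> ('k \<Rightarrow> nat)) set" where
  "V_set G = {(y, a). is_bp G y \<and> \<not> le_en a (fst y)}"

definition V_rel :: "('v, 'a, 'k) kgraph \<Rightarrow> ('a, 'k) gmor \<times> ('k \<Rightarrow> nat) \<Rightarrow> ('a, 'k) gmor \<times> ('k \<Rightarrow> nat) \<Rightarrow> bool" where
  "V_rel G u w = (case u of ((m, x), a) \<Rightarrow> case w of ((m', y), b) \<Rightarrow>
     vtx G x (meet_en a m) = vtx G y (meet_en b m') \<and> a - meet_en a m = b - meet_en b m')"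

definition Vcls :: "('v, 'a, 'k) kgraph \<Rightarrow> ('a, 'k) gmor \<times> ('k \<Rightarrow> nat) \<Rightarrow> (('a, 'k) gmor \<times> ('k \<Rightarrow> nat)) set" where
  "Vcls G u = {w \<in> V_set G. V_rel G u w}"

definition P_set :: "('v, 'a, 'k) kgraph \<Rightarrow> (('a, 'k) gmor \<times> ('k \<Rightarrow> nat) \<times> ('k \<Rightarrow> nat)) set" where
  "P_set G = {(y, a, b). is_bp G y \<and> a \<le> b \<and> \<not> le_en b (fst y)}"

definition P_rel :: "('v, 'a, 'k) kgraph \<Rightarrow> ('a, 'k) gmor \<times> ('k \<Rightarrow> nat) \<times> ('k \<Rightarrow> nat)
      \<Rightarrow> ('a, 'k) gmor \<times> ('k \<Rightarrow> nat) \<times> ('k \<Rightarrow> nat) \<Rightarrow> bool" where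
  "P_rel G u w = (case u of ((m, x), a, b) \<Rightarrow> case w of ((m', y), c, e) \<Rightarrow>
     x (meet_en a m) (meet_en b m) = y (meet_en c m') (meet_en e m')
     \<and> a - meet_en a m = c - meet_en c m' \<and> b - a = e - c)"

definition Pcls :: "('v, 'a, 'k) kgraph \<Rightarrow> ('a, 'k) gmor \<times> ('k \<Rightarrow> nat) \<times> ('k \<Rightarrow> nat)
      \<Rightarrow> (('a, 'k) gmor \<times> ('k \<Rightarrow> nat) \<times> ('k \<Rightarrow> nat)) set" where
  "Pcls G u = {w \<in> P_set G. P_rel G u w}"

definition Vtilde where "Vtilde G = Vcls G ` V_set G"
definition Ptilde where "Ptilde G = Pcls G ` P_set G"

definition seg :: "('v, 'a, 'k) kgraph \<Rightarrow> 'a \<Rightarrow> ('k \<Rightarrow> nat) \<Rightarrow> ('k \<Rightarrow> nat) \<Rightarrow> 'a" where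
  "seg G mu p q = (THE nu. \<exists>al be. al \<in> kmor G \<and> nu \<in> kmor G \<and> be \<in> kmor G
       \<and> ksr G al = krg G nu \<and> ksr G nu = krg G be
       \<and> kcp G (kcp G al nu) be = mu
       \<and> kdg G al = p \<and> kdg G nu = q - p \<and> kdg G be = kdg G mu - q)"

definition shift :: "('a, 'k) gmor \<Rightarrow> ('k \<Rightarrow> nat) \<Rightarrow> ('a, 'k) gmor" where
  "shift y p = (case y of (m, x) \<Rightarrow> (\<lambda>i. m i - enat (p i), \<lambda>a b. x (a + p) (b + p)))"

definition cat :: "('v, 'a, 'k) kgraph \<Rightarrow> 'a \<Rightarrow> ('a, 'k) gmor \<Rightarrow> ('a, 'k) gmor" where
  "cat G l y = (case y of (m, x) \<Rightarrow>
     (\<lambda>i. enat (kdg G l i) + m i,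
      \<lambda>p q. seg G (kcp G l (x 0 (sup q (kdg G l) - kdg G l))) p q))"

definition rep :: "'b set \<Rightarrow> 'b" where "rep c = (SOME z. z \<in> c)"

type_synonym ('a, 'k) vcls = "(('a, 'k) gmor \<times> ('k \<Rightarrow> nat)) set"
type_synonym ('a, 'k) pcls = "(('a, 'k) gmor \<times> ('k \<Rightarrow> nat) \<times> ('k \<Rightarrow> nat)) set"

definition ext :: "('v, 'a, 'k) kgraph \<Rightarrow> ('v + ('a, 'k) vcls, 'a + ('a, 'k) pcls, 'k) kgraph" where
  "ext G = \<lparr>
     kobj = Inl ` kobj G \<union> Inr ` Vtilde G,
     kmor = Inl ` kmor G \<union> Inr ` Ptilde G,
     krg = (\<lambda>f. case f of Inl a \<Rightarrow> Inl (krg G a)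
                | Inr c \<Rightarrow> (case rep c of ((m, x), a, b) \<Rightarrow>
                     if le_en a m then Inl (vtx G x a) else Inr (Vcls G ((m, x), a)))),
     ksr = (\<lambda>f. case f of Inl a \<Rightarrow> Inl (ksr G a)
                | Inr c \<Rightarrow> (case rep c of ((m, x), a, b) \<Rightarrow> Inr (Vcls G ((m, x), b)))),
     kcp = (\<lambda>f g. case f of
                Inl l \<Rightarrow> (case g of
                    Inl b \<Rightarrow> Inl (kcp G l b)
                  | Inr c \<Rightarrow> (case rep c of (y, a, b) \<Rightarrow>
                       Inr (Pcls G (cat G l (shift y a), 0, kdg G l + b - a))))
              | Inr c \<Rightarrow> (case g of
                    Inl b \<Rightarrow> undefined
                  | Inr c' \<Rightarrow> (case rep c of ((m, x), a, b) \<Rightarrow>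
                       case rep c' of ((m', y), p, q) \<Rightarrow>
                       Inr (Pcls G (cat G (x 0 (meet_en b m)) (shift (m', y) (meet_en p m')),
                                    a, b + q - p))))),
     kid = (\<lambda>v. case v of Inl w \<Rightarrow> Inl (kid G w)
                | Inr c \<Rightarrow> (case rep c of (y, a) \<Rightarrow> Inr (Pcls G (y, a, a)))),
     kdg = (\<lambda>f. case f of Inl a \<Rightarrow> kdg G a | Inr c \<Rightarrow> (case rep c of (y, a, b) \<Rightarrow> b - a))
   \<rparr>"

end

theory Submission
  imports Defs
begin

locale kgr =
  fixes G :: "('v, 'a, 'k::finite) kgraph"
  assumes kg: "k_graph G"
begin

abbreviation "MG \<equiv> kmor G"
abbreviation "OG \<equiv> kobj G"
abbreviation "rG \<equiv> krg G"
abbreviation "sG \<equiv> ksr G"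
abbreviation "cG \<equiv> kcp G"
abbreviation "dG \<equiv> kdg G"
abbreviation "iG \<equiv> kid G"

lemmas kgu = kg[unfolded k_graph_def]
lemmas kg1 = kgu[THEN conjunct1]
lemmas kg2 = kgu[THEN conjunct2, THEN conjunct1]
lemmas kg3 = kgu[THEN conjunct2, THEN conjunct2, THEN conjunct1]
lemmas kg4 = kgu[THEN conjunct2, THEN conjunct2, THEN conjunct2, THEN conjunct1]
lemmas kg5 = kgu[THEN conjunct2, THEN conjunct2, THEN conjunct2, THEN conjunct2, THEN conjunct1]
lemmas kg6 = kgu[THEN conjunct2, THEN conjunct2, THEN conjunct2, THEN conjunct2, THEN conjunct2, THEN conjunct1]
lemmas kg7 = kgu[THEN conjunct2, THEN conjunct2, THEN conjunct2, THEN conjunct2, THEN conjunct2, THEN conjunct2, THEN conjunct1]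
lemmas kg8 = kgu[THEN conjunct2, THEN conjunct2, THEN conjunct2, THEN conjunct2, THEN conjunct2, THEN conjunct2, THEN conjunct2]

lemma cntO: "countable OG" using kg1 .
lemma cntM: "countable MG" using kg2 .

lemma mor_rs: "a \<in> MG \<Longrightarrow> rG a \<in> OG \<and> sG a \<in> OG"
  using kg3 by blast

lemma id_props: "v \<in> OG \<Longrightarrow> iG v \<in> MG \<and> rG (iG v) = v \<and> sG (iG v) = v \<and> dG (iG v) = 0"
  using kg4 by blast

lemma cp_props: "a \<in> MG \<Longrightarrow> b \<in> MG \<Longrightarrow> sG a = rG b \<Longrightarrow>
   cG a b \<in> MG \<and> rG (cG a b) = rG a \<and> sG (cG a b) = sG b \<and> dG (cG a b) = dG a + dG b"
  using kg5 by blast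

lemma cp_mor: "a \<in> MG \<Longrightarrow> b \<in> MG \<Longrightarrow> sG a = rG b \<Longrightarrow> cG a b \<in> MG"
  and cp_rg: "a \<in> MG \<Longrightarrow> b \<in> MG \<Longrightarrow> sG a = rG b \<Longrightarrow> rG (cG a b) = rG a"
  and cp_sr: "a \<in> MG \<Longrightarrow> b \<in> MG \<Longrightarrow> sG a = rG b \<Longrightarrow> sG (cG a b) = sG b"
  and cp_dg: "a \<in> MG \<Longrightarrow> b \<in> MG \<Longrightarrow> sG a = rG b \<Longrightarrow> dG (cG a b) = dG a + dG b"
  using cp_props by blast+

lemma assoc: "a \<in> MG \<Longrightarrow> b \<in> MG \<Longrightarrow> c \<in> MG \<Longrightarrow> sG a = rG b \<Longrightarrow> sG b = rG c \<Longrightarrow>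
   cG (cG a b) c = cG a (cG b c)"
  using kg6 by blast

lemma idl: "a \<in> MG \<Longrightarrow> cG (iG (rG a)) a = a" and idr: "a \<in> MG \<Longrightarrow> cG a (iG (sG a)) = a"
  using kg7 by blast+

lemma ex1_uniq: "\<exists>!x. P x \<Longrightarrow> P a \<Longrightarrow> P b \<Longrightarrow> a = b" by blast

lemma fact8: "l \<in> MG \<Longrightarrow> dG l = m + n \<Longrightarrow> \<exists>!p. p \<in> MG \<times> MG \<and> sG (fst p) = rG (snd p)
               \<and> cG (fst p) (snd p) = l \<and> dG (fst p) = m \<and> dG (snd p) = n"
  using kg8 by blast

lemma fact_ex: "l \<in> MG \<Longrightarrow> dG l = m + n \<Longrightarrow>
  \<exists>a b. a \<in> MG \<and> b \<in> MG \<and> sG a = rG b \<and> cG a b = l \<and> dG a = m \<and> dG b = n"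
proof -
  assume "l \<in> MG" "dG l = m + n"
  from ex1_implies_ex[OF fact8[OF this]] obtain p where "p \<in> MG \<times> MG \<and> sG (fst p) = rG (snd p)
               \<and> cG (fst p) (snd p) = l \<and> dG (fst p) = m \<and> dG (snd p) = n" by blast
  then show ?thesis by (intro exI[of _ "fst p"] exI[of _ "snd p"]) auto
qed

lemma fact_uniq:
  assumes "a \<in> MG" "b \<in> MG" "a' \<in> MG" "b' \<in> MG" "sG a = rG b" "sG a' = rG b'"
    "cG a b = cG a' b'" "dG a = dG a'"
  shows "a = a' \<and> b = b'"
proof -
  let ?l = "cG a b"
  have l: "?l \<in> MG" using assms cp_props by blast
  have e1: "dG ?l = dG a + dG b" using assms cp_props by blast
  moreover have "dG ?l = dG a' + dG b'" using assms(3,4,6,7) cp_props by simp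
  ultimately have db: "dG b = dG b'" using assms(8) by simp
  have u: "\<exists>!p. p \<in> MG \<times> MG \<and> sG (fst p) = rG (snd p)
               \<and> cG (fst p) (snd p) = ?l \<and> dG (fst p) = dG a \<and> dG (snd p) = dG b"
    using fact8[OF l e1] .
  have "(a, b) = (a', b')"
    apply (rule ex1_uniq[OF u])
    using assms db by auto
  then show ?thesis by simp
qed

lemma deg0: "e \<in> MG \<Longrightarrow> dG e = 0 \<Longrightarrow> e = iG (rG e)"
proof -
  assume e: "e \<in> MG" "dG e = 0"
  have o: "rG e \<in> OG" "sG e \<in> OG" using e mor_rs by auto
  have "cG (iG (rG e)) e = cG e (iG (sG e))" using e idl idr by simp
  moreover have "dG (iG (rG e)) = dG e" using id_props o e by simp
  ultimately show ?thesis using fact_uniq[of "iG (rG e)" e e "iG (sG e)"] id_props o e by auto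
qed

lemma seg_unique:
  assumes "al \<in> MG" "nu \<in> MG" "be \<in> MG" "sG al = rG nu" "sG nu = rG be" "cG (cG al nu) be = mu"
  shows "seg G mu (dG al) (dG al + dG nu) = nu"
  unfolding seg_def
proof (rule the_equality)
  have c0: "cG al nu \<in> MG" "sG (cG al nu) = rG be" "dG (cG al nu) = dG al + dG nu"
    using assms cp_mor cp_sr cp_dg by auto
  have dm: "dG mu = dG al + dG nu + dG be" using c0 assms cp_dg by force
  show "\<exists>al' be'. al' \<in> MG \<and> nu \<in> MG \<and> be' \<in> MG \<and> sG al' = rG nu \<and> sG nu = rG be' \<and>
       cG (cG al' nu) be' = mu \<and> dG al' = dG al \<and> dG nu = dG al + dG nu - dG al \<and> dG be' = dG mu - (dG al + dG nu)"
    using assms dm by (intro exI[of _ al] exI[of _ be]) auto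
  fix nu'
  assume "\<exists>al' be'. al' \<in> MG \<and> nu' \<in> MG \<and> be' \<in> MG \<and> sG al' = rG nu' \<and> sG nu' = rG be' \<and>
       cG (cG al' nu') be' = mu \<and> dG al' = dG al \<and> dG nu' = dG al + dG nu - dG al \<and> dG be' = dG mu - (dG al + dG nu)"
  then obtain al' be' where h: "al' \<in> MG" "nu' \<in> MG" "be' \<in> MG" "sG al' = rG nu'" "sG nu' = rG be'"
       "cG (cG al' nu') be' = mu" "dG al' = dG al" "dG nu' = dG al + dG nu - dG al" by blast
  have dn: "dG nu' = dG nu" using h(8) by simp
  have c1: "cG al nu \<in> MG" "sG (cG al nu) = rG be" "dG (cG al nu) = dG al + dG nu"
    using c0 by auto
  have c2: "cG al' nu' \<in> MG" "sG (cG al' nu') = rG be'" "dG (cG al' nu') = dG al + dG nu"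
    using h cp_mor cp_sr cp_dg dn by auto
  have "cG al nu = cG al' nu'" using fact_uniq[OF c1(1) assms(3) c2(1) h(3) c1(2) c2(2)] assms h c1 c2 by simp
  then show "nu' = nu" using fact_uniq[OF assms(1,2) h(1,2) assms(4) h(4)] h by simp
qed

lemma vec_split: "(p::'k \<Rightarrow> nat) \<le> q \<Longrightarrow> q \<le> D \<Longrightarrow> D - p = (q - p) + (D - q)"
  by (auto simp: le_fun_def fun_eq_iff)

lemma seg_exists:
  assumes "mu \<in> MG" "p \<le> q" "q \<le> dG mu"
  shows "\<exists>al be. al \<in> MG \<and> seg G mu p q \<in> MG \<and> be \<in> MG \<and> sG al = rG (seg G mu p q)
     \<and> sG (seg G mu p q) = rG be \<and> cG (cG al (seg G mu p q)) be = mu \<and> dG al = p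
     \<and> dG (seg G mu p q) = q - p \<and> dG be = dG mu - q"
proof -
  have "p \<le> dG mu" using assms(2,3) by (rule order_trans)
  then have "dG mu = p + (dG mu - p)" by (simp add: le_fun_def fun_eq_iff)
  obtain al rho where a: "al \<in> MG" "rho \<in> MG" "sG al = rG rho" "cG al rho = mu" "dG al = p" "dG rho = dG mu - p"
    using fact_ex[OF assms(1) \<open>dG mu = p + (dG mu - p)\<close>] by blast
  have "dG rho = (q - p) + (dG mu - q)" using a(6) vec_split[OF assms(2,3)] by simp
  obtain nu be where b: "nu \<in> MG" "be \<in> MG" "sG nu = rG be" "cG nu be = rho" "dG nu = q - p" "dG be = dG mu - q"
    using fact_ex[OF a(2) \<open>dG rho = (q - p) + (dG mu - q)\<close>] by blast
  have rr: "rG rho = rG nu" using b cp_rg by force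
  have m: "cG (cG al nu) be = mu" using assoc[of al nu be] a b rr by simp
  have "seg G mu (dG al) (dG al + dG nu) = nu" using seg_unique[OF a(1) b(1,2)] a b rr m by simp
  moreover have "dG al + dG nu = q" using a b assms by (auto simp: le_fun_def fun_eq_iff)
  ultimately have "seg G mu p q = nu" using a by simp
  then show ?thesis using a b rr m by (intro exI[of _ al] exI[of _ be]) auto
qed

lemma seg_unique':
  assumes "al \<in> MG" "nu \<in> MG" "be \<in> MG" "sG al = rG nu" "sG nu = rG be" "cG (cG al nu) be = mu"
    "dG al = p" "q = p + dG nu"
  shows "seg G mu p q = nu"
  using seg_unique[OF assms(1-6)] assms(7,8) by simp

lemma seg_mor:
  assumes "mu \<in> MG" "p \<le> q" "q \<le> dG mu"
  shows "seg G mu p q \<in> MG" "dG (seg G mu p q) = q - p"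
  using seg_exists[OF assms] by auto

lemma seg_whole: "mu \<in> MG \<Longrightarrow> seg G mu 0 (dG mu) = mu"
proof -
  assume m: "mu \<in> MG"
  have o: "rG mu \<in> OG" "sG mu \<in> OG" using m mor_rs by auto
  show ?thesis
    apply (rule seg_unique'[of "iG (rG mu)" mu "iG (sG mu)"])
    using m o id_props idl idr by auto
qed

lemma seg_end: "mu \<in> MG \<Longrightarrow> seg G mu (dG mu) (dG mu) = iG (sG mu)"
proof -
  assume m: "mu \<in> MG"
  have o: "rG mu \<in> OG" "sG mu \<in> OG" using m mor_rs by auto
  show ?thesis
    apply (rule seg_unique'[of mu "iG (sG mu)" "iG (sG mu)"])
    using m o id_props idl idr by auto
qed

lemma seg_ext:
  assumes "mu \<in> MG" "nu \<in> MG" "sG mu = rG nu" "p \<le> q" "q \<le> dG mu"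
  shows "seg G (cG mu nu) p q = seg G mu p q"
proof -
  obtain al be where h: "al \<in> MG" "seg G mu p q \<in> MG" "be \<in> MG" "sG al = rG (seg G mu p q)"
     "sG (seg G mu p q) = rG be" "cG (cG al (seg G mu p q)) be = mu" "dG al = p"
     "dG (seg G mu p q) = q - p" "dG be = dG mu - q"
    using seg_exists[OF assms(1,4,5)] by blast
  have c: "cG al (seg G mu p q) \<in> MG" "sG (cG al (seg G mu p q)) = rG be" using h cp_mor cp_sr by auto
  have sb: "sG be = rG nu" using cp_sr[OF c(1) h(3) c(2)] h(6) assms(3) by simp
  have e: "cG (cG al (seg G mu p q)) (cG be nu) = cG mu nu" using assoc[OF c(1) h(3) assms(2) c(2) sb] h(6) by simp
  have r: "rG (cG be nu) = rG be" using h sb assms cp_rg by auto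
  have m: "cG be nu \<in> MG" using h sb assms cp_mor by auto
  have qq: "q = p + dG (seg G mu p q)" using h(8) assms(4) by (simp add: le_fun_def fun_eq_iff)
  show ?thesis
    by (rule seg_unique'[of al "seg G mu p q" "cG be nu", OF h(1) h(2) m h(4) _ e h(7) qq]) (simp add: r h(5))
qed

lemma seg_cp:
  assumes "mu \<in> MG" "p \<le> q" "q \<le> t" "t \<le> dG mu"
  shows "sG (seg G mu p q) = rG (seg G mu q t) \<and> cG (seg G mu p q) (seg G mu q t) = seg G mu p t"
proof -
  have pt: "p \<le> t" using assms order_trans by blast
  obtain al be where h: "al \<in> MG" "seg G mu p t \<in> MG" "be \<in> MG" "sG al = rG (seg G mu p t)"
     "sG (seg G mu p t) = rG be" "cG (cG al (seg G mu p t)) be = mu" "dG al = p"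
     "dG (seg G mu p t) = t - p" "dG be = dG mu - t"
    using seg_exists[OF assms(1) pt assms(4)] by blast
  have "dG (seg G mu p t) = (q - p) + (t - q)" using h(8) vec_split[OF assms(2,3)] by simp
  obtain n1 n2 where f: "n1 \<in> MG" "n2 \<in> MG" "sG n1 = rG n2" "cG n1 n2 = seg G mu p t"
     "dG n1 = q - p" "dG n2 = t - q"
    using fact_ex[OF h(2) \<open>dG (seg G mu p t) = (q - p) + (t - q)\<close>] by blast
  have r1: "rG n1 = rG (seg G mu p t)" using f cp_rg by force
  have s2: "sG n2 = sG (seg G mu p t)" using f cp_sr by force
  have c2: "cG n2 be \<in> MG" "rG (cG n2 be) = rG n2" using f h s2 cp_mor cp_rg by auto
  have sn2: "sG n2 = rG be" using s2 h(5) by simp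
  have e0: "mu = cG al (cG (seg G mu p t) be)" using assoc[OF h(1-5)] h(6) by simp
  have e0': "cG (seg G mu p t) be = cG n1 (cG n2 be)" using assoc[OF f(1,2) h(3) f(3) sn2] f(4) by simp
  have e1: "mu = cG (cG al n1) (cG n2 be)"
    using assoc[OF h(1) f(1) c2(1)] h(4) r1 f(3) c2(2) e0 e0' by simp
  have q1: "seg G mu p q = n1"
    apply (rule seg_unique'[OF h(1) f(1) c2(1)])
    using h f r1 c2 e1 assms by (auto simp: le_fun_def fun_eq_iff)
  have c3: "cG al n1 \<in> MG" "sG (cG al n1) = rG n2" "dG (cG al n1) = q" using h f r1 cp_mor cp_sr cp_dg assms
    by (auto simp: le_fun_def fun_eq_iff)
  have e2: "mu = cG (cG (cG al n1) n2) be" using e1 assoc[of "cG al n1" n2 be] c3 f h s2 by simp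
  have q2: "seg G mu q t = n2"
    apply (rule seg_unique'[OF c3(1) f(2) h(3) c3(2)])
    using h f s2 e2 c3 assms by (auto simp: le_fun_def fun_eq_iff)
  show ?thesis using q1 q2 f by simp
qed

lemma seg_id: "mu \<in> MG \<Longrightarrow> p \<le> dG mu \<Longrightarrow> seg G mu p p = iG (rG (seg G mu p p))"
  using seg_mor[of mu p p] deg0 by simp

lemma seg_rg: "mu \<in> MG \<Longrightarrow> p \<le> q \<Longrightarrow> q \<le> dG mu \<Longrightarrow> rG (seg G mu p q) = rG (seg G mu p p)"
proof -
  assume a: "mu \<in> MG" "p \<le> q" "q \<le> dG mu"
  have "p \<le> dG mu" using a order_trans by blast
  then have "seg G mu p p = iG (rG (seg G mu p p))" "seg G mu p p \<in> MG" using seg_id seg_mor a by auto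
  have "sG (seg G mu p p) = rG (seg G mu p q) \<and> cG (seg G mu p p) (seg G mu p q) = seg G mu p q"
    using seg_cp[of mu p p q] a by simp
  then show ?thesis using \<open>seg G mu p p = iG (rG (seg G mu p p))\<close> \<open>seg G mu p p \<in> MG\<close> id_props mor_rs
    by (metis (no_types, lifting))
qed

lemma le_en_mono: "p \<le> q \<Longrightarrow> le_en q m \<Longrightarrow> le_en p m"
  unfolding le_en_def le_fun_def by (meson enat_ord_simps(1) order_trans)

lemma gm_mor: "is_gm G (m,x) \<Longrightarrow> p \<le> q \<Longrightarrow> le_en q m \<Longrightarrow> x p q \<in> MG"
  and gm_dg: "is_gm G (m,x) \<Longrightarrow> p \<le> q \<Longrightarrow> le_en q m \<Longrightarrow> dG (x p q) = q - p"
  and gm_id: "is_gm G (m,x) \<Longrightarrow> le_en p m \<Longrightarrow> x p p = iG (rG (x p p))"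
  unfolding is_gm_def by auto

lemma gm_cp: "is_gm G (m,x) \<Longrightarrow> p \<le> q \<Longrightarrow> q \<le> t \<Longrightarrow> le_en t m \<Longrightarrow>
    sG (x p q) = rG (x q t)"
  and gm_cp2: "is_gm G (m,x) \<Longrightarrow> p \<le> q \<Longrightarrow> q \<le> t \<Longrightarrow> le_en t m \<Longrightarrow>
    cG (x p q) (x q t) = x p t"
  unfolding is_gm_def by blast+

lemma gm_rg: "is_gm G (m,x) \<Longrightarrow> p \<le> q \<Longrightarrow> le_en q m \<Longrightarrow> rG (x p q) = vtx G x p"
proof -
  assume a: "is_gm G (m,x)" "p \<le> q" "le_en q m"
  have pm: "le_en p m" using le_en_mono a by blast
  have "rG (cG (x p p) (x p q)) = rG (x p p)"
    using cp_rg[OF gm_mor[OF a(1) order_refl pm] gm_mor[OF a] gm_cp[OF a(1) order_refl a(2,3)]] .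
  then show ?thesis using gm_cp2[OF a(1) order_refl a(2,3)] unfolding vtx_def by simp
qed

lemma gm_sr: "is_gm G (m,x) \<Longrightarrow> p \<le> q \<Longrightarrow> le_en q m \<Longrightarrow> sG (x p q) = vtx G x q"
  using gm_cp[of m x p q q] unfolding vtx_def by simp

lemma gm_seg: "is_gm G (m,x) \<Longrightarrow> p \<le> q \<Longrightarrow> q \<le> Q \<Longrightarrow> le_en Q m \<Longrightarrow> seg G (x 0 Q) p q = x p q"
proof -
  assume a: "is_gm G (m,x)" "p \<le> q" "q \<le> Q" "le_en Q m"
  have q: "le_en q m" using le_en_mono a by blast
  have p: "le_en p m" using le_en_mono a q by blast
  have z: "(0::'k\<Rightarrow>nat) \<le> p" by (simp add: le_fun_def)
  have zq: "(0::'k\<Rightarrow>nat) \<le> q" by (simp add: le_fun_def)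
  show ?thesis
  proof (rule seg_unique'[of "x 0 p" "x p q" "x q Q"])
    show "x 0 p \<in> MG" "x p q \<in> MG" "x q Q \<in> MG" using gm_mor a p q z by auto
    show "sG (x 0 p) = rG (x p q)" "sG (x p q) = rG (x q Q)" using gm_cp a p q z by auto
    have "cG (x 0 p) (x p q) = x 0 q" using gm_cp2 a z q by blast
    then show "cG (cG (x 0 p) (x p q)) (x q Q) = x 0 Q" using gm_cp2[OF a(1) zq a(3,4)] by simp
    show "dG (x 0 p) = p" using gm_dg[OF a(1) z p] by simp
    show "q = p + dG (x p q)" using gm_dg[OF a(1,2) q] a(2) by (simp add: le_fun_def fun_eq_iff)
  qed
qed

lemma shift_eq: "shift (m,x) a = (\<lambda>i. m i - enat (a i), \<lambda>p q. x (p + a) (q + a))"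
  by (simp add: shift_def)

lemma enat_sub_le: "enat a \<le> M \<Longrightarrow> (enat q \<le> M - enat a) = (enat (q + a) \<le> M)"
  by (cases M) auto

lemma enat_sub_eq: "enat a \<le> M \<Longrightarrow> (enat q = M - enat a) = (enat (q + a) = M)"
  by (cases M) auto

lemma le_en_shift: "le_en a m \<Longrightarrow> le_en q (\<lambda>i. m i - enat (a i)) = le_en (q + a) m"
  unfolding le_en_def using enat_sub_le by simp

lemma is_gm_shift:
  assumes g: "is_gm G (m,x)" and a: "le_en a m"
  shows "is_gm G (shift (m,x) a)"
proof -
  have A: "\<forall>p q. p \<le> q \<and> le_en q (\<lambda>i. m i - enat (a i)) \<longrightarrow> x (p + a) (q + a) \<in> MG \<and> dG (x (p + a) (q + a)) = q - p"
  proof (intro allI impI)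
    fix p q :: "'k \<Rightarrow> nat" assume h: "p \<le> q \<and> le_en q (\<lambda>i. m i - enat (a i))"
    have 1: "p + a \<le> q + a" using h by (simp add: le_fun_def)
    have 2: "le_en (q + a) m" using h le_en_shift a by blast
    show "x (p + a) (q + a) \<in> MG \<and> dG (x (p + a) (q + a)) = q - p"
      using gm_mor[OF g 1 2] gm_dg[OF g 1 2] by (simp add: fun_eq_iff)
  qed
  have B: "\<forall>p. le_en p (\<lambda>i. m i - enat (a i)) \<longrightarrow> x (p + a) (p + a) = iG (rG (x (p + a) (p + a)))"
    using gm_id[OF g] le_en_shift[OF a] by blast
  have C: "\<forall>p q t. p \<le> q \<and> q \<le> t \<and> le_en t (\<lambda>i. m i - enat (a i)) \<longrightarrow>
         sG (x (p + a) (q + a)) = rG (x (q + a) (t + a)) \<and> cG (x (p + a) (q + a)) (x (q + a) (t + a)) = x (p + a) (t + a)"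
  proof (intro allI impI)
    fix p q t :: "'k \<Rightarrow> nat" assume h: "p \<le> q \<and> q \<le> t \<and> le_en t (\<lambda>i. m i - enat (a i))"
    have 1: "p + a \<le> q + a" "q + a \<le> t + a" using h by (auto simp add: le_fun_def)
    have 2: "le_en (t + a) m" using h le_en_shift a by blast
    show "sG (x (p + a) (q + a)) = rG (x (q + a) (t + a)) \<and> cG (x (p + a) (q + a)) (x (q + a) (t + a)) = x (p + a) (t + a)"
      using gm_cp[OF g 1 2] gm_cp2[OF g 1 2] by simp
  qed
  show ?thesis unfolding shift_eq is_gm_def using A B C by simp
qed

lemma is_bp_shift:
  assumes g: "is_bp G (m,x)" and a: "le_en a m"
  shows "is_bp G (shift (m,x) a)"
proof -
  have gm: "is_gm G (m,x)" using g unfolding is_bp_def by simp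
  obtain nx where nx: "le_en nx m" "\<forall>p i. nx \<le> p \<and> le_en p m \<and> enat (p i) = m i \<longrightarrow>
            \<not> (\<exists>l\<in>MG. rG l = vtx G x p \<and> dG l = e_vec i)"
    using g unfolding is_bp_def by auto
  have "le_en (nx - a) (\<lambda>i. m i - enat (a i))"
  proof -
    have "nx - a + a = sup nx a" by (simp add: fun_eq_iff sup_nat_def max_def)
    moreover have "le_en (sup nx a) m" using nx(1) a unfolding le_en_def by (simp add: sup_nat_def max_def)
    ultimately show ?thesis using le_en_shift[OF a] by simp
  qed
  moreover have "\<forall>p i. nx - a \<le> p \<and> le_en p (\<lambda>i. m i - enat (a i)) \<and> enat (p i) = m i - enat (a i) \<longrightarrow>
            \<not> (\<exists>l\<in>MG. rG l = vtx G (\<lambda>p q. x (p + a) (q + a)) p \<and> dG l = e_vec i)"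
  proof (intro allI impI)
    fix p i assume h: "nx - a \<le> p \<and> le_en p (\<lambda>i. m i - enat (a i)) \<and> enat (p i) = m i - enat (a i)"
    have 1: "nx \<le> p + a" unfolding le_fun_def
    proof
      fix j have "nx j - a j \<le> p j" using h by (simp add: le_fun_def)
      then show "nx j \<le> (p + a) j" by simp
    qed
    have 2: "le_en (p + a) m" using h le_en_shift[OF a] by simp
    have 3: "enat ((p + a) i) = m i" using h enat_sub_eq[of "a i" "m i" "p i"] a unfolding le_en_def by simp
    show "\<not> (\<exists>l\<in>MG. rG l = vtx G (\<lambda>p q. x (p + a) (q + a)) p \<and> dG l = e_vec i)"
      using nx(2) 1 2 3 unfolding vtx_def by blast
  qed
  ultimately show ?thesis using is_gm_shift[OF gm a] unfolding is_bp_def shift_eq by auto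
qed

lemma cat_eq: "cat G l (m,x) = (\<lambda>i. enat (dG l i) + m i, \<lambda>p q. seg G (cG l (x 0 (sup q (dG l) - dG l))) p q)"
  by (simp add: cat_def)

lemma cat_dom: "le_en t (\<lambda>i. enat (D i) + m i) \<Longrightarrow> le_en (sup t D - D) m \<and> t \<le> D + (sup t D - D)"
proof -
  assume a: "le_en t (\<lambda>i. enat (D i) + m i)"
  have "\<forall>i. enat (sup (t i) (D i) - D i) \<le> m i"
  proof
    fix i have h: "enat (t i) \<le> enat (D i) + m i" using a unfolding le_en_def by simp
    show "enat (sup (t i) (D i) - D i) \<le> m i" using h by (cases "m i") (auto simp: sup_nat_def max_def)
  qed
  then show ?thesis unfolding le_en_def by (simp add: le_fun_def sup_nat_def max_def)
qed

lemma enat_add_le: "enat b \<le> M \<Longrightarrow> enat (a + b) \<le> enat a + M"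
  by (cases M) auto

lemma vla1: "(a::'k\<Rightarrow>nat) + b \<le> p \<Longrightarrow> p = a + (p - a)"
proof (rule ext)
  fix j assume "a + b \<le> p" then have "a j + b j \<le> p j" using le_funD by fastforce
  then show "p j = (a + (p - a)) j" by simp
qed

lemma vla2: "(a::'k\<Rightarrow>nat) + b \<le> p \<Longrightarrow> b \<le> p - a"
proof (rule le_funI)
  fix j assume "a + b \<le> p" then have "a j + b j \<le> p j" using le_funD by fastforce
  then show "b j \<le> (p - a) j" by simp
qed

lemma enat_add_le_D: "enat (a + b) \<le> enat a + M \<Longrightarrow> enat b \<le> M"
  by (cases M) auto

lemma enat_add_eq_D: "enat (a + b) = enat a + M \<Longrightarrow> enat b = M"
  by (cases M) auto

lemma zero_le_vec: "(0::'k \<Rightarrow> nat) \<le> p" by (simp add: le_fun_def)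

lemma cat_seg:
  assumes g: "is_gm G (m,x)" and l: "l \<in> MG" "sG l = vtx G x 0"
    and pq: "p \<le> q" "q \<le> dG l + Q" and Q: "le_en Q m"
  shows "snd (cat G l (m,x)) p q = seg G (cG l (x 0 Q)) p q"
proof -
  define Q0 where "Q0 = sup q (dG l) - dG l"
  have Q0Q: "Q0 \<le> Q" unfolding Q0_def
  proof (rule le_funI)
    fix j show "(sup q (dG l) - dG l) j \<le> Q j" using le_funD[OF pq(2), of j] by (simp add: sup_nat_def max_def) arith
  qed
  have Q0m: "le_en Q0 m" using le_en_mono[OF Q0Q Q] .
  have m1: "x 0 Q0 \<in> MG" "x Q0 Q \<in> MG" using gm_mor g Q0Q Q Q0m zero_le_vec by auto
  have c1: "sG (x 0 Q0) = rG (x Q0 Q)" "cG (x 0 Q0) (x Q0 Q) = x 0 Q"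
    using gm_cp[OF g zero_le_vec Q0Q Q] gm_cp2[OF g zero_le_vec Q0Q Q] by auto
  have r0: "rG (x 0 Q0) = sG l" using gm_rg[OF g zero_le_vec Q0m] l by simp
  have mu: "cG l (x 0 Q0) \<in> MG" "sG (cG l (x 0 Q0)) = rG (x Q0 Q)" "dG (cG l (x 0 Q0)) = dG l + Q0"
    using cp_mor[OF l(1) m1(1)] cp_sr[OF l(1) m1(1)] cp_dg[OF l(1) m1(1)] r0 c1
      gm_dg[OF g zero_le_vec Q0m] by auto
  have e: "cG l (x 0 Q) = cG (cG l (x 0 Q0)) (x Q0 Q)"
    using assoc[OF l(1) m1(1) m1(2)] r0 c1 by simp
  have "q \<le> dG l + Q0" unfolding Q0_def by (rule le_funI) (simp add: sup_nat_def max_def)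
  then have qd: "q \<le> dG (cG l (x 0 Q0))" using mu(3) by simp
  show ?thesis unfolding cat_eq snd_conv Q0_def[symmetric] e
    using seg_ext[OF mu(1) m1(2) mu(2) pq(1) qd] by simp
qed

lemma cat_gm:
  assumes g: "is_gm G (m,x)" and l: "l \<in> MG" "sG l = vtx G x 0"
  shows "is_gm G (cat G l (m,x))"
proof -
  let ?z = "snd (cat G l (m,x))"
  let ?M = "\<lambda>i. enat (dG l i) + m i"
  have fc: "fst (cat G l (m,x)) = ?M" unfolding cat_eq by simp
  have key: "\<And>t. le_en t ?M \<Longrightarrow> \<exists>Q. le_en Q m \<and> t \<le> dG l + Q \<and> cG l (x 0 Q) \<in> MG
      \<and> dG (cG l (x 0 Q)) = dG l + Q"
  proof -
    fix t assume t: "le_en t ?M"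
    obtain Q where Q: "le_en Q m" "t \<le> dG l + Q" using cat_dom[OF t] by blast
    have r0: "rG (x 0 Q) = sG l" using gm_rg[OF g zero_le_vec Q(1)] l by simp
    have "cG l (x 0 Q) \<in> MG" "dG (cG l (x 0 Q)) = dG l + Q"
      using cp_mor[OF l(1) gm_mor[OF g zero_le_vec Q(1)]] cp_dg[OF l(1) gm_mor[OF g zero_le_vec Q(1)]] r0
        gm_dg[OF g zero_le_vec Q(1)] by auto
    then show "?thesis t" using Q by blast
  qed
  have A: "\<forall>p q. p \<le> q \<and> le_en q ?M \<longrightarrow> ?z p q \<in> MG \<and> dG (?z p q) = q - p"
  proof (intro allI impI)
    fix p q assume h: "p \<le> q \<and> le_en q ?M"
    obtain Q where Q: "le_en Q m" "q \<le> dG l + Q" "cG l (x 0 Q) \<in> MG" "dG (cG l (x 0 Q)) = dG l + Q"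
      using key h by blast
    show "?z p q \<in> MG \<and> dG (?z p q) = q - p"
      using cat_seg[OF g l _ Q(2,1)] h seg_mor[OF Q(3) _ ] Q by auto
  qed
  have B: "\<forall>p. le_en p ?M \<longrightarrow> ?z p p = iG (rG (?z p p))"
  proof (intro allI impI)
    fix p assume h: "le_en p ?M"
    obtain Q where Q: "le_en Q m" "p \<le> dG l + Q" "cG l (x 0 Q) \<in> MG" "dG (cG l (x 0 Q)) = dG l + Q"
      using key h by blast
    show "?z p p = iG (rG (?z p p))"
      using cat_seg[OF g l order_refl Q(2,1)] seg_id[OF Q(3)] Q by auto
  qed
  have C: "\<forall>p q t. p \<le> q \<and> q \<le> t \<and> le_en t ?M \<longrightarrow>
         ksr G (?z p q) = krg G (?z q t) \<and> kcp G (?z p q) (?z q t) = ?z p t"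
  proof (intro allI impI)
    fix p q t assume h: "p \<le> q \<and> q \<le> t \<and> le_en t ?M"
    obtain Q where Q: "le_en Q m" "t \<le> dG l + Q" "cG l (x 0 Q) \<in> MG" "dG (cG l (x 0 Q)) = dG l + Q"
      using key h by blast
    have qQ: "q \<le> dG l + Q" using h Q(2) order_trans by blast
    have pt: "p \<le> t" using h order_trans by blast
    show "ksr G (?z p q) = krg G (?z q t) \<and> kcp G (?z p q) (?z q t) = ?z p t"
      using cat_seg[OF g l _ qQ Q(1), of p] cat_seg[OF g l _ Q(2,1), of q] cat_seg[OF g l pt Q(2,1)]
        seg_cp[OF Q(3), of p q t] h Q by simp
  qed
  obtain cm cx where cc: "cat G l (m,x) = (cm, cx)" by fastforce
  then have "cm = ?M" "cx = ?z" using fc by auto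
  then show ?thesis using A B C cc unfolding is_gm_def by simp
qed

lemma cat_bp:
  assumes g: "is_bp G (m,x)" and l: "l \<in> MG" "sG l = vtx G x 0"
  shows "is_bp G (cat G l (m,x))"
proof -
  have gm: "is_gm G (m,x)" using g unfolding is_bp_def by simp
  obtain nx where nx: "le_en nx m" "\<forall>p i. nx \<le> p \<and> le_en p m \<and> enat (p i) = m i \<longrightarrow>
            \<not> (\<exists>l\<in>MG. rG l = vtx G x p \<and> dG l = e_vec i)"
    using g unfolding is_bp_def by auto
  let ?z = "snd (cat G l (m,x))"
  let ?M = "\<lambda>i. enat (dG l i) + m i"
  have fc: "fst (cat G l (m,x)) = ?M" unfolding cat_eq by simp
  have 1: "le_en (dG l + nx) ?M" using nx(1) unfolding le_en_def by (auto intro: enat_add_le)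
  have 2: "\<forall>p i. dG l + nx \<le> p \<and> le_en p ?M \<and> enat (p i) = ?M i \<longrightarrow>
            \<not> (\<exists>l'\<in>MG. rG l' = vtx G ?z p \<and> dG l' = e_vec i)"
  proof (intro allI impI)
    fix p i assume h: "dG l + nx \<le> p \<and> le_en p ?M \<and> enat (p i) = ?M i"
    define P where "P = p - dG l"
    have pP: "p = dG l + P" using h unfolding P_def by (auto intro: vla1)
    have P1: "nx \<le> P" using h unfolding P_def by (auto intro: vla2)
    have P2: "le_en P m" using h unfolding pP le_en_def by (auto intro: enat_add_le_D)
    have P3: "enat (P i) = m i" using h unfolding pP by (auto intro: enat_add_eq_D)
    have r0: "rG (x 0 P) = sG l" using gm_rg[OF gm zero_le_vec P2] l by simp
    have mu: "cG l (x 0 P) \<in> MG" "dG (cG l (x 0 P)) = p" "sG (cG l (x 0 P)) = vtx G x P"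
      using cp_mor[OF l(1) gm_mor[OF gm zero_le_vec P2]] cp_dg[OF l(1) gm_mor[OF gm zero_le_vec P2]] r0
        cp_sr[OF l(1) gm_mor[OF gm zero_le_vec P2]] gm_sr[OF gm zero_le_vec P2]
        gm_dg[OF gm zero_le_vec P2] pP by auto
    have "?z p p = iG (vtx G x P)"
      using cat_seg[OF gm l order_refl _ P2, of p] pP seg_end[OF mu(1)] mu by simp
    moreover have "vtx G x P \<in> OG" using mor_rs[OF gm_mor[OF gm zero_le_vec P2]] gm_sr[OF gm zero_le_vec P2] by simp
    ultimately have "vtx G ?z p = vtx G x P" unfolding vtx_def using id_props by simp
    then show "\<not> (\<exists>l'\<in>MG. rG l' = vtx G ?z p \<and> dG l' = e_vec i)" using nx(2) P1 P2 P3 by auto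
  qed
  obtain cm cx where cc: "cat G l (m,x) = (cm, cx)" by fastforce
  then have "cm = ?M" "cx = ?z" using fc by auto
  then show ?thesis using 1 2 cc cat_gm[OF gm l] unfolding is_bp_def by auto
qed

lemma cat_val:
  assumes g: "is_gm G (m,x)" and ab: "al \<in> MG" "be \<in> MG" "sG al = rG be" "sG be = vtx G x 0"
    and D: "le_en D m"
  shows "snd (cat G (cG al be) (m,x)) (dG al) (dG al + dG be + D) = cG be (x 0 D)"
proof -
  have l: "cG al be \<in> MG" "sG (cG al be) = vtx G x 0" "dG (cG al be) = dG al + dG be"
    using cp_mor[OF ab(1-3)] cp_sr[OF ab(1-3)] cp_dg[OF ab(1-3)] ab(4) by auto
  have le: "dG al \<le> dG al + dG be + D" by (simp add: le_fun_def)
  have r0: "rG (x 0 D) = sG be" using gm_rg[OF g zero_le_vec D] ab by simp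
  have xm: "x 0 D \<in> MG" "dG (x 0 D) = D" using gm_mor[OF g zero_le_vec D] gm_dg[OF g zero_le_vec D] by auto
  have nu: "cG be (x 0 D) \<in> MG" "rG (cG be (x 0 D)) = rG be" "dG (cG be (x 0 D)) = dG be + D"
    using cp_mor[OF ab(2) xm(1)] cp_rg[OF ab(2) xm(1)] cp_dg[OF ab(2) xm(1)] r0 xm by auto
  have so: "sG (cG be (x 0 D)) \<in> OG" using mor_rs nu(1) by blast
  have "snd (cat G (cG al be) (m,x)) (dG al) (dG al + dG be + D) = seg G (cG (cG al be) (x 0 D)) (dG al) (dG al + dG be + D)"
    using cat_seg[OF g l(1,2) le _ D] l(3) by simp
  also have "\<dots> = cG be (x 0 D)"
  proof (rule seg_unique'[OF ab(1) nu(1) id_props[OF so, THEN conjunct1]])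
    show "sG al = rG (cG be (x 0 D))" using nu ab by simp
    show "sG (cG be (x 0 D)) = rG (iG (sG (cG be (x 0 D))))" using id_props[OF so] by simp
    show "cG (cG al (cG be (x 0 D))) (iG (sG (cG be (x 0 D)))) = cG (cG al be) (x 0 D)"
      using idr[OF cp_mor[OF ab(1) nu(1)]] cp_sr[OF ab(1) nu(1)] assoc[OF ab(1,2) xm(1) ab(3)] r0 nu ab by simp
    show "dG al = dG al" ..
    show "dG al + dG be + D = dG al + dG (cG be (x 0 D))" using nu by (simp add: add.assoc)
  qed
  finally show ?thesis .
qed

definition pinv :: "('a, 'k) gmor \<times> ('k \<Rightarrow> nat) \<times> ('k \<Rightarrow> nat) \<Rightarrow> 'a \<times> ('k \<Rightarrow> nat) \<times> ('k \<Rightarrow> nat)" where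
  "pinv u = (case u of ((m,x),a,b) \<Rightarrow> (x (meet_en a m) (meet_en b m), a - meet_en a m, b - a))"

definition vinv :: "('a, 'k) gmor \<times> ('k \<Rightarrow> nat) \<Rightarrow> 'v \<times> ('k \<Rightarrow> nat)" where
  "vinv u = (case u of ((m,x),a) \<Rightarrow> (vtx G x (meet_en a m), a - meet_en a m))"

lemma pinv_simp: "pinv ((m,x),a,b) = (x (meet_en a m) (meet_en b m), a - meet_en a m, b - a)"
  by (simp add: pinv_def)

lemma vinv_simp: "vinv ((m,x),a) = (vtx G x (meet_en a m), a - meet_en a m)"
  by (simp add: vinv_def)

lemma P_rel_iff: "P_rel G u w = (pinv u = pinv w)"
  unfolding P_rel_def pinv_def by (auto split: prod.splits)

lemma V_rel_iff: "V_rel G u w = (vinv u = vinv w)"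
  unfolding V_rel_def vinv_def by (auto split: prod.splits)

lemma Pcls_eq: "Pcls G u = {w \<in> P_set G. pinv w = pinv u}"
  unfolding Pcls_def P_rel_iff by auto

lemma Vcls_eq: "Vcls G u = {w \<in> V_set G. vinv w = vinv u}"
  unfolding Vcls_def V_rel_iff by auto

lemma rep_P: "u \<in> P_set G \<Longrightarrow> rep (Pcls G u) \<in> P_set G \<and> pinv (rep (Pcls G u)) = pinv u"
proof -
  assume u: "u \<in> P_set G"
  then have "u \<in> Pcls G u" unfolding Pcls_eq by simp
  then have "rep (Pcls G u) \<in> Pcls G u" unfolding rep_def by (rule someI)
  then show ?thesis unfolding Pcls_eq by simp
qed

lemma rep_V: "u \<in> V_set G \<Longrightarrow> rep (Vcls G u) \<in> V_set G \<and> vinv (rep (Vcls G u)) = vinv u"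
proof -
  assume u: "u \<in> V_set G"
  then have "u \<in> Vcls G u" unfolding Vcls_eq by simp
  then have "rep (Vcls G u) \<in> Vcls G u" unfolding rep_def by (rule someI)
  then show ?thesis unfolding Vcls_eq by simp
qed

lemma Pcls_cong: "pinv u = pinv w \<Longrightarrow> Pcls G u = Pcls G w"
  unfolding Pcls_eq by simp

lemma Vcls_cong: "vinv u = vinv w \<Longrightarrow> Vcls G u = Vcls G w"
  unfolding Vcls_eq by simp

lemma Vcls_inj: "u \<in> V_set G \<Longrightarrow> w \<in> V_set G \<Longrightarrow> Vcls G u = Vcls G w \<Longrightarrow> vinv u = vinv w"
proof -
  assume a: "u \<in> V_set G" "w \<in> V_set G" "Vcls G u = Vcls G w"
  then have "u \<in> Vcls G w" unfolding Vcls_eq by auto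
  then show ?thesis unfolding Vcls_eq by simp
qed

lemma Ptilde_rep: "c \<in> Ptilde G \<Longrightarrow> rep c \<in> P_set G \<and> c = Pcls G (rep c)"
proof -
  assume "c \<in> Ptilde G"
  then obtain u where u: "u \<in> P_set G" "c = Pcls G u" unfolding Ptilde_def by blast
  then have "rep c \<in> P_set G" "pinv (rep c) = pinv u" using rep_P by auto
  then show ?thesis using Pcls_cong[of u "rep c"] u by simp
qed

lemma Vtilde_rep: "c \<in> Vtilde G \<Longrightarrow> rep c \<in> V_set G \<and> c = Vcls G (rep c)"
proof -
  assume "c \<in> Vtilde G"
  then obtain u where u: "u \<in> V_set G" "c = Vcls G u" unfolding Vtilde_def by blast
  then have "rep c \<in> V_set G" "vinv (rep c) = vinv u" using rep_V by auto
  then show ?thesis using Vcls_cong[of u "rep c"] u by simp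
qed

lemma Ptilde_inj: "c \<in> Ptilde G \<Longrightarrow> c' \<in> Ptilde G \<Longrightarrow> pinv (rep c) = pinv (rep c') \<Longrightarrow> c = c'"
proof -
  assume a: "c \<in> Ptilde G" "c' \<in> Ptilde G" "pinv (rep c) = pinv (rep c')"
  have "c = Pcls G (rep c)" "c' = Pcls G (rep c')" using Ptilde_rep a by auto
  then show ?thesis using Pcls_cong[OF a(3)] by simp
qed

lemma Vtilde_inj: "c \<in> Vtilde G \<Longrightarrow> c' \<in> Vtilde G \<Longrightarrow> vinv (rep c) = vinv (rep c') \<Longrightarrow> c = c'"
proof -
  assume a: "c \<in> Vtilde G" "c' \<in> Vtilde G" "vinv (rep c) = vinv (rep c')"
  have "c = Vcls G (rep c)" "c' = Vcls G (rep c')" using Vtilde_rep a by auto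
  then show ?thesis using Vcls_cong[OF a(3)] by simp
qed

definition meetc :: "nat \<Rightarrow> enat \<Rightarrow> nat" where "meetc a M = the_enat (min (enat a) M)"

lemma meet_apply: "meet_en a m i = meetc (a i) (m i)"
  by (simp add: meet_en_def meetc_def)

lemma meetc_le: "meetc a M \<le> a" and meetc_leM: "enat (meetc a M) \<le> M"
  and meetc_id: "enat a \<le> M \<Longrightarrow> meetc a M = a"
  and meetc_nle: "\<not> enat a \<le> M \<Longrightarrow> enat (meetc a M) = M"
  by (cases M; simp add: meetc_def)+

lemma meet_le: "meet_en a m \<le> a"
  by (rule le_funI) (simp add: meet_apply meetc_le)

lemma meet_le_en: "le_en (meet_en a m) m"
  unfolding le_en_def by (simp add: meet_apply meetc_leM)

lemma meet_id: "le_en a m \<Longrightarrow> meet_en a m = a"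
  unfolding le_en_def by (simp add: fun_eq_iff meet_apply meetc_id)

lemma meetc_mono: "a \<le> b \<Longrightarrow> meetc a M \<le> meetc b M"
  by (cases M) (auto simp: meetc_def)

lemma meet_mono: "a \<le> b \<Longrightarrow> meet_en a m \<le> meet_en b m"
  by (rule le_funI) (simp add: meet_apply meetc_mono le_funD)

lemma le_en_iff_diff: "le_en a m = (a - meet_en a m = 0)"
proof -
  have "\<And>i. (enat (a i) \<le> m i) = (a i - meetc (a i) (m i) = 0)"
    by (case_tac "m i") (auto simp: meetc_def)
  then show ?thesis unfolding le_en_def by (simp add: fun_eq_iff meet_apply)
qed

lemma mc1: "a \<le> b \<Longrightarrow> meetc b M - meetc a M \<le> b - a"
  by (cases M) (auto simp: meetc_def)

lemma mc2: "a \<le> b \<Longrightarrow> a - meetc a M \<noteq> 0 \<Longrightarrow> meetc b M - meetc a M = 0"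
  by (cases M) (auto simp: meetc_def)

lemma mc3: "a \<le> b \<Longrightarrow> b - meetc b M = (a - meetc a M) + (b - a) - (meetc b M - meetc a M)"
  by (cases M) (auto simp: meetc_def)

lemma pset_D: "((m,x),a,b) \<in> P_set G \<Longrightarrow> is_gm G (m,x) \<and> is_bp G (m,x) \<and> a \<le> b \<and> \<not> le_en b m"
  by (simp add: P_set_def is_bp_def)

lemma vset_D: "((m,x),a) \<in> V_set G \<Longrightarrow> is_gm G (m,x) \<and> is_bp G (m,x) \<and> \<not> le_en a m"
  by (simp add: V_set_def is_bp_def)

definition goodT :: "'a \<times> ('k \<Rightarrow> nat) \<times> ('k \<Rightarrow> nat) \<Rightarrow> bool" where
  "goodT t = (case t of (mu,f,n) \<Rightarrow> mu \<in> MG \<and> dG mu \<le> n \<and> (\<forall>i. f i \<noteq> 0 \<longrightarrow> dG mu i = 0))"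

definition goodV :: "'v \<times> ('k \<Rightarrow> nat) \<Rightarrow> bool" where
  "goodV w = (case w of (v,f) \<Rightarrow> v \<in> OG \<and> f \<noteq> 0)"

lemma pset_facts:
  assumes u: "((m,x),a,b) \<in> P_set G"
  shows "meet_en a m \<le> meet_en b m" "le_en (meet_en b m) m" "le_en (meet_en a m) m"
    "x (meet_en a m) (meet_en b m) \<in> MG"
    "dG (x (meet_en a m) (meet_en b m)) = meet_en b m - meet_en a m"
    "rG (x (meet_en a m) (meet_en b m)) = vtx G x (meet_en a m)"
    "sG (x (meet_en a m) (meet_en b m)) = vtx G x (meet_en b m)"
    "goodT (pinv ((m,x),a,b))"
    "b - meet_en b m = (a - meet_en a m) + (b - a) - dG (x (meet_en a m) (meet_en b m))"
proof -
  have d: "is_gm G (m,x)" "a \<le> b" using pset_D[OF u] by auto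
  show ab: "meet_en a m \<le> meet_en b m" using meet_mono d by blast
  show bm: "le_en (meet_en b m) m" "le_en (meet_en a m) m" using meet_le_en by auto
  show xm: "x (meet_en a m) (meet_en b m) \<in> MG" using gm_mor[OF d(1) ab bm(1)] .
  show dx: "dG (x (meet_en a m) (meet_en b m)) = meet_en b m - meet_en a m" using gm_dg[OF d(1) ab bm(1)] .
  show "rG (x (meet_en a m) (meet_en b m)) = vtx G x (meet_en a m)" using gm_rg[OF d(1) ab bm(1)] .
  show "sG (x (meet_en a m) (meet_en b m)) = vtx G x (meet_en b m)" using gm_sr[OF d(1) ab bm(1)] .
  have ab': "\<And>i. a i \<le> b i" using d(2) by (simp add: le_fun_def)
  have "meet_en b m - meet_en a m \<le> b - a"
    by (rule le_funI) (simp add: meet_apply mc1 ab')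
  moreover have "\<forall>i. (a - meet_en a m) i \<noteq> 0 \<longrightarrow> (meet_en b m - meet_en a m) i = 0"
    by (simp add: meet_apply mc2 ab')
  ultimately show "goodT (pinv ((m,x),a,b))" unfolding goodT_def pinv_simp using xm dx by simp
  show "b - meet_en b m = (a - meet_en a m) + (b - a) - dG (x (meet_en a m) (meet_en b m))"
    unfolding dx by (simp add: fun_eq_iff meet_apply mc3[OF ab'])
qed

lemma vset_good: "((m,x),a) \<in> V_set G \<Longrightarrow> goodV (vinv ((m,x),a))"
proof -
  assume u: "((m,x),a) \<in> V_set G"
  have d: "is_gm G (m,x)" "\<not> le_en a m" using vset_D[OF u] by auto
  have "x (meet_en a m) (meet_en a m) \<in> MG" using gm_mor[OF d(1) order_refl meet_le_en] .
  then have "vtx G x (meet_en a m) \<in> OG" unfolding vtx_def using mor_rs by blast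
  moreover have "a - meet_en a m \<noteq> 0" using d(2) le_en_iff_diff[of a m] by simp
  ultimately show ?thesis unfolding goodV_def vinv_simp by simp
qed

abbreviation "E \<equiv> ext G"

lemma E_obj: "kobj E = Inl ` OG \<union> Inr ` Vtilde G" by (simp add: ext_def)
lemma E_mor: "kmor E = Inl ` MG \<union> Inr ` Ptilde G" by (simp add: ext_def)
lemma E_rg_l: "krg E (Inl a) = Inl (rG a)" by (simp add: ext_def)
lemma E_rg_r: "rep c = ((m,x),a,b) \<Longrightarrow> krg E (Inr c) = (if le_en a m then Inl (vtx G x a) else Inr (Vcls G ((m,x),a)))"
  by (simp add: ext_def)
lemma E_sr_l: "ksr E (Inl a) = Inl (sG a)" by (simp add: ext_def)
lemma E_sr_r: "rep c = ((m,x),a,b) \<Longrightarrow> ksr E (Inr c) = Inr (Vcls G ((m,x),b))"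
  by (simp add: ext_def)
lemma E_dg_l: "kdg E (Inl a) = dG a" by (simp add: ext_def)
lemma E_dg_r: "rep c = (y,a,b) \<Longrightarrow> kdg E (Inr c) = b - a" by (simp add: ext_def)
lemma E_id_l: "kid E (Inl w) = Inl (iG w)" by (simp add: ext_def)
lemma E_id_r: "rep c = (y,a) \<Longrightarrow> kid E (Inr c) = Inr (Pcls G (y,a,a))" by (simp add: ext_def)
lemma E_cp_ll: "kcp E (Inl l) (Inl b) = Inl (cG l b)" by (simp add: ext_def)
lemma E_cp_lr: "rep c = (y,a,b) \<Longrightarrow> kcp E (Inl l) (Inr c) = Inr (Pcls G (cat G l (shift y a), 0, dG l + b - a))"
  by (simp add: ext_def)
lemma E_cp_rr: "rep c = ((m,x),a,b) \<Longrightarrow> rep c' = ((m',y),p,q) \<Longrightarrow>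
  kcp E (Inr c) (Inr c') = Inr (Pcls G (cat G (x 0 (meet_en b m)) (shift (m',y) (meet_en p m')), a, b + q - p))"
  by (simp add: ext_def)

fun absV :: "'v + ('a, 'k) vcls \<Rightarrow> 'v + ('v \<times> ('k \<Rightarrow> nat))" where
  "absV (Inl v) = Inl v" | "absV (Inr c) = Inr (vinv (rep c))"

fun absM :: "'a + ('a, 'k) pcls \<Rightarrow> 'a + ('a \<times> ('k \<Rightarrow> nat) \<times> ('k \<Rightarrow> nat))" where
  "absM (Inl l) = Inl l" | "absM (Inr c) = Inr (pinv (rep c))"

fun abs_rg :: "'a + ('a \<times> ('k \<Rightarrow> nat) \<times> ('k \<Rightarrow> nat)) \<Rightarrow> 'v + ('v \<times> ('k \<Rightarrow> nat))" where
  "abs_rg (Inl l) = Inl (rG l)"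
| "abs_rg (Inr (mu,f,n)) = (if f = 0 then Inl (rG mu) else Inr (rG mu, f))"

fun abs_sr :: "'a + ('a \<times> ('k \<Rightarrow> nat) \<times> ('k \<Rightarrow> nat)) \<Rightarrow> 'v + ('v \<times> ('k \<Rightarrow> nat))" where
  "abs_sr (Inl l) = Inl (sG l)"
| "abs_sr (Inr (mu,f,n)) = Inr (sG mu, f + n - dG mu)"

fun abs_dg :: "'a + ('a \<times> ('k \<Rightarrow> nat) \<times> ('k \<Rightarrow> nat)) \<Rightarrow> 'k \<Rightarrow> nat" where
  "abs_dg (Inl l) = dG l"
| "abs_dg (Inr (mu,f,n)) = n"

fun abs_id :: "'v + ('v \<times> ('k \<Rightarrow> nat)) \<Rightarrow> 'a + ('a \<times> ('k \<Rightarrow> nat) \<times> ('k \<Rightarrow> nat))" where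
  "abs_id (Inl v) = Inl (iG v)"
| "abs_id (Inr (w,f)) = Inr (iG w, f, 0)"

fun abs_cp :: "'a + ('a \<times> ('k \<Rightarrow> nat) \<times> ('k \<Rightarrow> nat)) \<Rightarrow> 'a + ('a \<times> ('k \<Rightarrow> nat) \<times> ('k \<Rightarrow> nat))
   \<Rightarrow> 'a + ('a \<times> ('k \<Rightarrow> nat) \<times> ('k \<Rightarrow> nat))" where
  "abs_cp (Inl l) (Inl l') = Inl (cG l l')"
| "abs_cp (Inl l) (Inr (mu,f,n)) = Inr (cG l mu, 0, dG l + n)"
| "abs_cp (Inr (mu,f,n)) (Inr (mu',f',n')) = Inr (cG mu mu', f, n + n')"
| "abs_cp (Inr t) (Inl l) = undefined"

definition goodM where "goodM X = (case X of Inl l \<Rightarrow> l \<in> MG | Inr t \<Rightarrow> goodT t)"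
definition goodO where "goodO X = (case X of Inl v \<Rightarrow> v \<in> OG | Inr w \<Rightarrow> goodV w)"

lemma E_mor_cases: "f \<in> kmor E \<Longrightarrow> (\<And>l. f = Inl l \<Longrightarrow> l \<in> MG \<Longrightarrow> P) \<Longrightarrow>
   (\<And>c m x a b. f = Inr c \<Longrightarrow> c \<in> Ptilde G \<Longrightarrow> rep c = ((m,x),a,b) \<Longrightarrow> ((m,x),a,b) \<in> P_set G \<Longrightarrow> P) \<Longrightarrow> P"
proof -
  assume f: "f \<in> kmor E" and 1: "\<And>l. f = Inl l \<Longrightarrow> l \<in> MG \<Longrightarrow> P"
    and 2: "\<And>c m x a b. f = Inr c \<Longrightarrow> c \<in> Ptilde G \<Longrightarrow> rep c = ((m,x),a,b) \<Longrightarrow> ((m,x),a,b) \<in> P_set G \<Longrightarrow> P"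
  show P
  proof (cases f)
    case (Inl l) then show ?thesis using f 1 E_mor by auto
  next
    case (Inr c)
    then have c: "c \<in> Ptilde G" using f E_mor by auto
    obtain m x a b where "rep c = ((m,x),a,b)" by (metis prod.exhaust)
    then show ?thesis using 2 Inr c Ptilde_rep[OF c] by auto
  qed
qed

lemma E_obj_cases: "v \<in> kobj E \<Longrightarrow> (\<And>w. v = Inl w \<Longrightarrow> w \<in> OG \<Longrightarrow> P) \<Longrightarrow>
   (\<And>c m x a. v = Inr c \<Longrightarrow> c \<in> Vtilde G \<Longrightarrow> rep c = ((m,x),a) \<Longrightarrow> ((m,x),a) \<in> V_set G \<Longrightarrow> P) \<Longrightarrow> P"
proof -
  assume f: "v \<in> kobj E" and 1: "\<And>w. v = Inl w \<Longrightarrow> w \<in> OG \<Longrightarrow> P"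
    and 2: "\<And>c m x a. v = Inr c \<Longrightarrow> c \<in> Vtilde G \<Longrightarrow> rep c = ((m,x),a) \<Longrightarrow> ((m,x),a) \<in> V_set G \<Longrightarrow> P"
  show P
  proof (cases v)
    case (Inl l) then show ?thesis using f 1 E_obj by auto
  next
    case (Inr c)
    then have c: "c \<in> Vtilde G" using f E_obj by auto
    obtain m x a where "rep c = ((m,x),a)" by (metis prod.exhaust)
    then show ?thesis using 2 Inr c Vtilde_rep[OF c] by auto
  qed
qed

lemma absM_good: "f \<in> kmor E \<Longrightarrow> goodM (absM f)"
  by (erule E_mor_cases) (auto simp: goodM_def pset_facts)

lemma absV_good: "v \<in> kobj E \<Longrightarrow> goodO (absV v)"
  by (erule E_obj_cases) (auto simp: goodO_def vset_good)

lemma absM_inj: "f \<in> kmor E \<Longrightarrow> g \<in> kmor E \<Longrightarrow> absM f = absM g \<Longrightarrow> f = g"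
proof (cases f; cases g)
  fix c c' assume "f \<in> kmor E" "g \<in> kmor E" "absM f = absM g" "f = Inr c" "g = Inr c'"
  then show "f = g" using Ptilde_inj[of c c'] E_mor by auto
qed auto

lemma absV_inj: "f \<in> kobj E \<Longrightarrow> g \<in> kobj E \<Longrightarrow> absV f = absV g \<Longrightarrow> f = g"
proof (cases f; cases g)
  fix c c' assume "f \<in> kobj E" "g \<in> kobj E" "absV f = absV g" "f = Inr c" "g = Inr c'"
  then show "f = g" using Vtilde_inj[of c c'] E_obj by auto
qed auto

lemma E_rg_obj: "f \<in> kmor E \<Longrightarrow> krg E f \<in> kobj E"
proof (erule E_mor_cases)
  fix l assume "f = Inl l" "l \<in> MG" then show ?thesis using E_rg_l E_obj mor_rs by auto
next
  fix c m x a b assume h: "f = Inr c" "rep c = ((m,x),a,b)" "((m,x),a,b) \<in> P_set G"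
  have d: "is_gm G (m,x)" "is_bp G (m,x)" "a \<le> b" using pset_D[OF h(3)] by auto
  show ?thesis
  proof (cases "le_en a m")
    case True
    then have "x a a \<in> MG" using gm_mor[OF d(1) order_refl] by blast
    then have "vtx G x a \<in> OG" unfolding vtx_def using mor_rs by blast
    then show ?thesis using True h E_rg_r E_obj by auto
  next
    case False
    then have "((m,x),a) \<in> V_set G" using d unfolding V_set_def by simp
    then show ?thesis using False h E_rg_r E_obj unfolding Vtilde_def by auto
  qed
qed

lemma E_sr_obj: "f \<in> kmor E \<Longrightarrow> ksr E f \<in> kobj E"
proof (erule E_mor_cases)
  fix l assume "f = Inl l" "l \<in> MG" then show ?thesis using E_sr_l E_obj mor_rs by auto
next
  fix c m x a b assume h: "f = Inr c" "rep c = ((m,x),a,b)" "((m,x),a,b) \<in> P_set G"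
  have d: "is_bp G (m,x)" "\<not> le_en b m" using pset_D[OF h(3)] by auto
  then have "((m,x),b) \<in> V_set G" unfolding V_set_def by simp
  then show ?thesis using h E_sr_r E_obj unfolding Vtilde_def by auto
qed

lemma abs_rg_E: "f \<in> kmor E \<Longrightarrow> absV (krg E f) = abs_rg (absM f)"
proof (erule E_mor_cases)
  fix l assume "f = Inl l" then show ?thesis using E_rg_l by simp
next
  fix c m x a b assume h: "f = Inr c" "rep c = ((m,x),a,b)" "((m,x),a,b) \<in> P_set G"
  have d: "is_gm G (m,x)" "is_bp G (m,x)" "a \<le> b" using pset_D[OF h(3)] by auto
  note pf = pset_facts[OF h(3)]
  show ?thesis
  proof (cases "le_en a m")
    case True
    then have "a - meet_en a m = 0" "meet_en a m = a" using le_en_iff_diff meet_id by auto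
    then show ?thesis using True h E_rg_r pf(6) by (simp add: pinv_simp)
  next
    case False
    then have v: "((m,x),a) \<in> V_set G" using d unfolding V_set_def by simp
    have "a - meet_en a m \<noteq> 0" using False le_en_iff_diff[of a m] by simp
    then show ?thesis using False h E_rg_r pf(6) rep_V[OF v] by (simp add: pinv_simp vinv_simp)
  qed
qed

lemma abs_sr_E: "f \<in> kmor E \<Longrightarrow> absV (ksr E f) = abs_sr (absM f)"
proof (erule E_mor_cases)
  fix l assume "f = Inl l" then show ?thesis using E_sr_l by simp
next
  fix c m x a b assume h: "f = Inr c" "rep c = ((m,x),a,b)" "((m,x),a,b) \<in> P_set G"
  have d: "is_bp G (m,x)" "\<not> le_en b m" using pset_D[OF h(3)] by auto
  then have v: "((m,x),b) \<in> V_set G" unfolding V_set_def by simp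
  note pf = pset_facts[OF h(3)]
  show ?thesis using h E_sr_r pf(7,9) rep_V[OF v] by (simp add: pinv_simp vinv_simp)
qed

lemma abs_dg_E: "f \<in> kmor E \<Longrightarrow> kdg E f = abs_dg (absM f)"
proof (erule E_mor_cases)
  fix l assume "f = Inl l" then show ?thesis using E_dg_l by simp
next
  fix c m x a b assume h: "f = Inr c" "rep c = ((m,x),a,b)" "((m,x),a,b) \<in> P_set G"
  show ?thesis using h E_dg_r by (simp add: pinv_simp)
qed

lemma abs_id_E: "v \<in> kobj E \<Longrightarrow> kid E v \<in> kmor E \<and> absM (kid E v) = abs_id (absV v)"
proof (erule E_obj_cases)
  fix w assume "v = Inl w" "w \<in> OG" then show ?thesis using E_id_l E_mor id_props by auto
next
  fix c m x a assume h: "v = Inr c" "rep c = ((m,x),a)" "((m,x),a) \<in> V_set G"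
  have d: "is_gm G (m,x)" "is_bp G (m,x)" "\<not> le_en a m" using vset_D[OF h(3)] by auto
  have p: "((m,x),a,a) \<in> P_set G" using d unfolding P_set_def by simp
  have "x (meet_en a m) (meet_en a m) = iG (vtx G x (meet_en a m))"
    using gm_id[OF d(1) meet_le_en] unfolding vtx_def by simp
  then show ?thesis using h E_id_r E_mor p rep_P[OF p] unfolding Ptilde_def
    by (auto simp: pinv_simp vinv_simp)
qed

lemma coord_rr:
  fixes a b p q :: nat and M M' :: enat
  assumes "a \<le> b" "p \<le> q" "b - meetc b M = p - meetc p M'"
  shows "meetc a (enat (meetc b M) + (M' - enat (meetc p M'))) = meetc a M"
    "meetc (b + q - p) (enat (meetc b M) + (M' - enat (meetc p M'))) = meetc b M + meetc q M' - meetc p M'"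
    "\<not> enat b \<le> M \<Longrightarrow> \<not> enat (b + q - p) \<le> enat (meetc b M) + (M' - enat (meetc p M'))"
  using assms by (cases M; cases M'; auto simp: meetc_def min_def split: if_splits)+

lemma coord_lr:
  fixes a b d :: nat and M :: enat
  assumes "a \<le> b" "enat a \<le> M"
  shows "meetc (d + b - a) (enat d + (M - enat a)) = d + meetc b M - a"
    "\<not> enat b \<le> M \<Longrightarrow> \<not> enat (d + b - a) \<le> enat d + (M - enat a)"
  using assms by (cases M; auto simp: meetc_def min_def split: if_splits)+

lemma meetc0: "meetc 0 M = 0" by (cases M) (auto simp: meetc_def)

lemma not_le_en: "\<not> le_en b m \<Longrightarrow> \<exists>i. \<not> enat (b i) \<le> m i"
  unfolding le_en_def by simp

lemma cp_lr_E:
  assumes l: "l \<in> MG" and rc: "rep c = ((m,x),a,b)" and u: "((m,x),a,b) \<in> P_set G"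
    and fg: "ksr E (Inl l) = krg E (Inr c)"
  shows "kcp E (Inl l) (Inr c) \<in> kmor E \<and> absM (kcp E (Inl l) (Inr c)) = abs_cp (absM (Inl l)) (absM (Inr c))"
proof -
  have d: "is_gm G (m,x)" "is_bp G (m,x)" "a \<le> b" "\<not> le_en b m" using pset_D[OF u] by auto
  have am: "le_en a m" and sl: "sG l = vtx G x a"
    using fg unfolding E_sr_l E_rg_r[OF rc] by (auto split: if_splits)
  define x' where "x' = (\<lambda>p q. x (p + a) (q + a))"
  define m' where "m' = (\<lambda>i. m i - enat (a i))"
  have sh: "shift (m,x) a = (m', x')" unfolding shift_eq x'_def m'_def by simp
  have gm': "is_gm G (m',x')" using is_gm_shift[OF d(1) am] sh by simp
  have bp': "is_bp G (m',x')" using is_bp_shift[OF d(2) am] sh by simp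
  have sl': "sG l = vtx G x' 0" using sl unfolding x'_def vtx_def by simp
  define z where "z = cat G l (m',x')"
  have bpz: "is_bp G z" unfolding z_def using cat_bp[OF bp' l sl'] .
  have fz: "fst z = (\<lambda>i. enat (dG l i) + m' i)" unfolding z_def cat_eq by simp
  have ai: "\<And>i. a i \<le> b i" using d(3) by (simp add: le_fun_def)
  have ami: "\<And>i. enat (a i) \<le> m i" using am by (simp add: le_en_def)
  have nle: "\<not> le_en (dG l + b - a) (fst z)"
  proof -
    obtain i where i: "\<not> enat (b i) \<le> m i" using not_le_en[OF d(4)] by blast
    then have "\<not> enat (dG l i + b i - a i) \<le> enat (dG l i) + (m i - enat (a i))"
      using coord_lr(2)[OF ai ami] by blast
    then show ?thesis unfolding fz m'_def le_en_def by auto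
  qed
  define u' where "u' = (z, 0::'k\<Rightarrow>nat, dG l + b - a)"
  have pu': "u' \<in> P_set G" unfolding u'_def P_set_def using bpz nle by (auto simp: zero_le_vec)
  have aB: "a \<le> meet_en b m" using meet_mono[OF d(3), of m] meet_id[OF am] by simp
  have m0: "meet_en 0 (fst z) = 0" by (simp add: fun_eq_iff meet_apply meetc0)
  have m1: "meet_en (dG l + b - a) (fst z) = dG l + (meet_en b m - a)"
  proof (rule ext)
    fix i
    have "a i \<le> meet_en b m i" using aB by (simp add: le_fun_def)
    then show "meet_en (dG l + b - a) (fst z) i = (dG l + (meet_en b m - a)) i"
      using coord_lr(1)[OF ai ami, of "dG l i"] unfolding fz m'_def by (simp add: meet_apply)
  qed
  have lo: "rG l \<in> OG" using mor_rs l by blast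
  have ba: "meet_en b m - a + a = meet_en b m" using aB by (simp add: le_fun_def fun_eq_iff)
  have Dm: "le_en (meet_en b m - a) m'"
    unfolding m'_def using le_en_shift[OF am] meet_le_en ba by simp
  have cv: "snd z 0 (dG l + (meet_en b m - a)) = cG l (x a (meet_en b m))"
  proof -
    have "snd (cat G (cG (iG (rG l)) l) (m',x')) (dG (iG (rG l))) (dG (iG (rG l)) + dG l + (meet_en b m - a))
        = cG l (x' 0 (meet_en b m - a))"
      using cat_val[OF gm' id_props[OF lo, THEN conjunct1] l _ sl' Dm] id_props[OF lo] by simp
    moreover have "x' 0 (meet_en b m - a) = x a (meet_en b m)"
      unfolding x'_def using ba by simp
    ultimately show ?thesis unfolding z_def using idl[OF l] id_props[OF lo] by simp
  qed
  have pv: "pinv u' = (cG l (x a (meet_en b m)), 0, dG l + b - a)"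
    unfolding u'_def using m0 m1 cv by (cases z) (simp add: pinv_simp)
  have kc: "kcp E (Inl l) (Inr c) = Inr (Pcls G u')"
    unfolding E_cp_lr[OF rc] u'_def z_def sh ..
  have "absM (kcp E (Inl l) (Inr c)) = Inr (pinv u')" unfolding kc using rep_P[OF pu'] by simp
  moreover have "dG l + b - a = dG l + (b - a)" using ai by (simp add: fun_eq_iff)
  ultimately have "absM (kcp E (Inl l) (Inr c)) = abs_cp (absM (Inl l)) (absM (Inr c))"
    using pv rc meet_id[OF am] by (simp add: pinv_simp)
  moreover have "kcp E (Inl l) (Inr c) \<in> kmor E" unfolding kc E_mor Ptilde_def using pu' by auto
  ultimately show ?thesis by simp
qed

lemma cp_rr_E:
  assumes rc: "rep c = ((m,x),a,b)" and u: "((m,x),a,b) \<in> P_set G"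
    and rc': "rep c' = ((m',y),p,q)" and u': "((m',y),p,q) \<in> P_set G"
    and fg: "ksr E (Inr c) = krg E (Inr c')"
  shows "kcp E (Inr c) (Inr c') \<in> kmor E \<and> absM (kcp E (Inr c) (Inr c')) = abs_cp (absM (Inr c)) (absM (Inr c'))"
proof -
  have d: "is_gm G (m,x)" "is_bp G (m,x)" "a \<le> b" "\<not> le_en b m" using pset_D[OF u] by auto
  have d': "is_gm G (m',y)" "is_bp G (m',y)" "p \<le> q" "\<not> le_en q m'" using pset_D[OF u'] by auto
  have np: "\<not> le_en p m'" and vc: "Vcls G ((m,x),b) = Vcls G ((m',y),p)"
    using fg unfolding E_sr_r[OF rc] E_rg_r[OF rc'] by (auto split: if_splits)
  have v1: "((m,x),b) \<in> V_set G" using d unfolding V_set_def by simp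
  have v2: "((m',y),p) \<in> V_set G" using d' np unfolding V_set_def by simp
  have vv: "vinv ((m,x),b) = vinv ((m',y),p)" using Vcls_inj[OF v1 v2 vc] .
  define A where "A = meet_en a m"
  define B where "B = meet_en b m"
  define P where "P = meet_en p m'"
  define Q where "Q = meet_en q m'"
  have vB: "vtx G x B = vtx G y P" and oB: "b - B = p - P"
    using vv unfolding vinv_simp A_def B_def P_def Q_def by auto
  define y' where "y' = (\<lambda>s t. y (s + P) (t + P))"
  define n' where "n' = (\<lambda>i. m' i - enat (P i))"
  have Pm: "le_en P m'" unfolding P_def by (rule meet_le_en)
  have Bm: "le_en B m" unfolding B_def by (rule meet_le_en)
  have AB: "A \<le> B" unfolding A_def B_def using meet_mono[OF d(3)] .
  have PQ: "P \<le> Q" unfolding P_def Q_def using meet_mono[OF d'(3)] .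
  have sh: "shift (m',y) P = (n', y')" unfolding shift_eq y'_def n'_def by simp
  have gm': "is_gm G (n',y')" using is_gm_shift[OF d'(1) Pm] sh by simp
  have bp': "is_bp G (n',y')" using is_bp_shift[OF d'(2) Pm] sh by simp
  have x0B: "x 0 B \<in> MG" "dG (x 0 B) = B" using gm_mor[OF d(1) zero_le_vec Bm] gm_dg[OF d(1) zero_le_vec Bm] by auto
  have sl': "sG (x 0 B) = vtx G y' 0" using gm_sr[OF d(1) zero_le_vec Bm] vB unfolding y'_def vtx_def by simp
  define z where "z = cat G (x 0 B) (n',y')"
  have bpz: "is_bp G z" unfolding z_def using cat_bp[OF bp' x0B(1) sl'] .
  have fz: "fst z = (\<lambda>i. enat (B i) + n' i)" unfolding z_def cat_eq x0B(2) by simp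
  have ai: "\<And>i. a i \<le> b i" using d(3) by (simp add: le_fun_def)
  have pi: "\<And>i. p i \<le> q i" using d'(3) by (simp add: le_fun_def)
  have oi: "\<And>i. b i - meetc (b i) (m i) = p i - meetc (p i) (m' i)"
  proof -
    fix i show "b i - meetc (b i) (m i) = p i - meetc (p i) (m' i)"
      using fun_cong[OF oB, of i] unfolding B_def P_def by (simp add: meet_apply)
  qed
  have fzi: "\<And>i. fst z i = enat (meetc (b i) (m i)) + (m' i - enat (meetc (p i) (m' i)))"
    unfolding fz n'_def B_def P_def by (simp add: meet_apply)
  have nle: "\<not> le_en (b + q - p) (fst z)"
  proof -
    obtain i where i: "\<not> enat (b i) \<le> m i" using not_le_en[OF d(4)] by blast
    then show ?thesis using coord_rr(3)[OF ai pi oi i] fzi unfolding le_en_def by auto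
  qed
  have aq: "a \<le> b + q - p" using ai pi by (simp add: le_fun_def) (metis add_diff_assoc le_add1 order_trans)
  define u3 where "u3 = (z, a, b + q - p)"
  have pu3: "u3 \<in> P_set G" unfolding u3_def P_set_def using bpz nle aq by auto
  have ma: "meet_en a (fst z) = A"
    unfolding A_def by (rule ext) (simp add: meet_apply fzi coord_rr(1)[OF ai pi oi])
  have mb: "meet_en (b + q - p) (fst z) = B + Q - P"
    unfolding B_def Q_def P_def by (rule ext) (simp add: meet_apply fzi coord_rr(2)[OF ai pi oi])
  have xm: "x 0 A \<in> MG" "x A B \<in> MG" "sG (x 0 A) = rG (x A B)" "cG (x 0 A) (x A B) = x 0 B"
     "dG (x 0 A) = A" "dG (x A B) = B - A" "sG (x A B) = vtx G y' 0"
    using gm_mor[OF d(1) zero_le_vec] gm_mor[OF d(1) AB Bm] gm_cp[OF d(1) zero_le_vec AB Bm]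
      gm_cp2[OF d(1) zero_le_vec AB Bm] gm_dg[OF d(1) zero_le_vec] gm_dg[OF d(1) AB Bm]
      le_en_mono[OF AB Bm] gm_sr[OF d(1) AB Bm] sl' gm_sr[OF d(1) zero_le_vec Bm] by auto
  have QP: "Q - P + P = Q" using PQ by (simp add: le_fun_def fun_eq_iff)
  have Dm: "le_en (Q - P) n'"
    unfolding n'_def using le_en_shift[OF Pm] QP meet_le_en Q_def by simp
  have cv: "snd z A (B + Q - P) = cG (x A B) (y P Q)"
  proof -
    have "snd (cat G (cG (x 0 A) (x A B)) (n',y')) (dG (x 0 A)) (dG (x 0 A) + dG (x A B) + (Q - P))
        = cG (x A B) (y' 0 (Q - P))"
      using cat_val[OF gm' xm(1,2,3,7) Dm] .
    moreover have "dG (x 0 A) + dG (x A B) + (Q - P) = B + Q - P"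
      unfolding xm(5,6) using AB PQ by (simp add: le_fun_def fun_eq_iff)
    moreover have "y' 0 (Q - P) = y P Q" unfolding y'_def using QP by simp
    ultimately show ?thesis unfolding z_def xm(4) xm(5) by simp
  qed
  have pv: "pinv u3 = (cG (x A B) (y P Q), a - A, b + q - p - a)"
    unfolding u3_def using ma mb cv by (cases z) (simp add: pinv_simp)
  have kc: "kcp E (Inr c) (Inr c') = Inr (Pcls G u3)"
    using E_cp_rr[OF rc rc'] sh unfolding u3_def z_def B_def[symmetric] P_def[symmetric] by simp
  have "absM (kcp E (Inr c) (Inr c')) = Inr (pinv u3)" unfolding kc using rep_P[OF pu3] by simp
  moreover have "b + q - p - a = (b - a) + (q - p)" using ai pi by (simp add: fun_eq_iff add.commute)
  ultimately have "absM (kcp E (Inr c) (Inr c')) = abs_cp (absM (Inr c)) (absM (Inr c'))"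
    using pv rc rc' unfolding A_def B_def P_def Q_def by (simp add: pinv_simp)
  moreover have "kcp E (Inr c) (Inr c') \<in> kmor E" unfolding kc E_mor Ptilde_def using pu3 by auto
  ultimately show ?thesis by simp
qed

lemma abs_cp_E:
  assumes f: "f \<in> kmor E" and g: "g \<in> kmor E" and fg: "ksr E f = krg E g"
  shows "kcp E f g \<in> kmor E \<and> absM (kcp E f g) = abs_cp (absM f) (absM g)"
proof (rule E_mor_cases[OF f]; rule E_mor_cases[OF g])
  fix l l' assume h: "f = Inl l" "l \<in> MG" "g = Inl l'" "l' \<in> MG"
  then have "sG l = rG l'" using fg E_sr_l E_rg_l by simp
  then show ?thesis using h cp_mor E_cp_ll E_mor by auto
next
  fix l c m x a b assume h: "f = Inl l" "l \<in> MG" "g = Inr c" "rep c = ((m,x),a,b)" "((m,x),a,b) \<in> P_set G"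
  then show ?thesis using cp_lr_E[OF h(2,4,5)] fg by simp
next
  fix l c m x a b assume h: "g = Inl l" "f = Inr c" "rep c = ((m,x),a,b)"
  then show ?thesis using fg E_sr_r E_rg_l by simp
next
  fix c m x a b c' m' y p q assume h: "f = Inr c" "rep c = ((m,x),a,b)" "((m,x),a,b) \<in> P_set G"
    "g = Inr c'" "rep c' = ((m',y),p,q)" "((m',y),p,q) \<in> P_set G"
  then show ?thesis using cp_rr_E[OF h(2,3,5,6)] fg by simp
qed

lemma goodM_cases: "goodM X \<Longrightarrow> (\<And>l. X = Inl l \<Longrightarrow> l \<in> MG \<Longrightarrow> P) \<Longrightarrow>
  (\<And>mu f n. X = Inr (mu,f,n) \<Longrightarrow> goodT (mu,f,n) \<Longrightarrow> P) \<Longrightarrow> P"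
  unfolding goodM_def by (cases X) (auto split: prod.splits)

lemma goodT_D: "goodT (mu,f,n) \<Longrightarrow> mu \<in> MG \<and> dG mu \<le> n \<and> (\<forall>i. f i \<noteq> 0 \<longrightarrow> dG mu i = 0)"
  unfolding goodT_def by simp

lemma match_cases:
  assumes "abs_sr X = abs_rg Y" "goodM X" "goodM Y"
  shows "(\<exists>l l'. X = Inl l \<and> Y = Inl l' \<and> l \<in> MG \<and> l' \<in> MG \<and> sG l = rG l') \<or>
   (\<exists>l mu n. X = Inl l \<and> Y = Inr (mu, 0, n) \<and> l \<in> MG \<and> goodT (mu,0,n) \<and> sG l = rG mu) \<or>
   (\<exists>mu f n mu' f' n'. X = Inr (mu,f,n) \<and> Y = Inr (mu',f',n') \<and> goodT (mu,f,n) \<and> goodT (mu',f',n')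
       \<and> sG mu = rG mu' \<and> f' = f + n - dG mu \<and> f' \<noteq> 0)"
proof (rule goodM_cases[OF assms(2)]; rule goodM_cases[OF assms(3)])
  fix l l' assume "X = Inl l" "l \<in> MG" "Y = Inl l'" "l' \<in> MG"
  then show ?thesis using assms(1) by simp
next
  fix l mu f n assume h: "X = Inl l" "l \<in> MG" "Y = Inr (mu,f,n)" "goodT (mu,f,n)"
  then show ?thesis using assms(1) by (simp split: if_splits)
next
  fix l mu f n assume h: "Y = Inl l" "X = Inr (mu,f,n)"
  then show ?thesis using assms(1) by simp
next
  fix mu f n mu' f' n' assume h: "X = Inr (mu,f,n)" "goodT (mu,f,n)" "Y = Inr (mu',f',n')" "goodT (mu',f',n')"
  then show ?thesis using assms(1) by (simp split: if_splits)
qed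

lemma ab_rg_cp: "abs_sr X = abs_rg Y \<Longrightarrow> goodM X \<Longrightarrow> goodM Y \<Longrightarrow> abs_rg (abs_cp X Y) = abs_rg X"
  apply (drule (2) match_cases)
  apply (elim disjE exE conjE)
  using cp_rg goodT_D by auto

lemma ab_dg_cp: "abs_sr X = abs_rg Y \<Longrightarrow> goodM X \<Longrightarrow> goodM Y \<Longrightarrow> abs_dg (abs_cp X Y) = abs_dg X + abs_dg Y"
  apply (drule (2) match_cases)
  apply (elim disjE exE conjE)
  using cp_dg goodT_D by (auto simp: add.assoc)

lemma ab_sr_cp: "abs_sr X = abs_rg Y \<Longrightarrow> goodM X \<Longrightarrow> goodM Y \<Longrightarrow> abs_sr (abs_cp X Y) = abs_sr Y"
proof (drule (2) match_cases, elim disjE exE conjE)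
  fix l l' assume "X = Inl l" "Y = Inl l'" "l \<in> MG" "l' \<in> MG" "sG l = rG l'"
  then show ?thesis using cp_sr by simp
next
  fix l mu n assume h: "X = Inl l" "Y = Inr (mu, 0, n)" "l \<in> MG" "goodT (mu,0,n)" "sG l = rG mu"
  have m: "mu \<in> MG" using goodT_D[OF h(4)] by simp
  show ?thesis using h cp_sr[OF h(3) m h(5)] cp_dg[OF h(3) m h(5)] by (simp add: fun_eq_iff)
next
  fix mu f n mu' f' n' assume h: "X = Inr (mu,f,n)" "Y = Inr (mu',f',n')" "goodT (mu,f,n)" "goodT (mu',f',n')"
       "sG mu = rG mu'" "f' = f + n - dG mu" "f' \<noteq> 0"
  have m: "mu \<in> MG" "mu' \<in> MG" "dG mu \<le> n" using goodT_D[OF h(3)] goodT_D[OF h(4)] by auto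
  have "f + (n + n') - dG (cG mu mu') = f' + n' - dG mu'"
  proof (rule ext)
    fix i have "dG mu i \<le> n i" using m(3) by (simp add: le_fun_def)
    then show "(f + (n + n') - dG (cG mu mu')) i = (f' + n' - dG mu') i"
      using cp_dg[OF m(1,2) h(5)] h(6) by simp
  qed
  then show ?thesis using h cp_sr[OF m(1,2) h(5)] by simp
qed

lemma ab_assoc:
  assumes "abs_sr X = abs_rg Y" "abs_sr Y = abs_rg Z" "goodM X" "goodM Y" "goodM Z"
  shows "abs_cp (abs_cp X Y) Z = abs_cp X (abs_cp Y Z)"
  using match_cases[OF assms(1,3,4)] match_cases[OF assms(2,4,5)]
proof (elim disjE exE conjE)
  fix l1 l2 l2' l3 assume h: "X = Inl l1" "Y = Inl l2" "l1 \<in> MG" "l2 \<in> MG" "sG l1 = rG l2"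
    "Y = Inl l2'" "Z = Inl l3" "l3 \<in> MG" "sG l2' = rG l3"
  then show ?thesis using assoc by simp
next
  fix l1 l2 l2' mu n assume h: "X = Inl l1" "Y = Inl l2" "l1 \<in> MG" "l2 \<in> MG" "sG l1 = rG l2"
    "Y = Inl l2'" "Z = Inr (mu,0,n)" "goodT (mu,0,n)" "sG l2' = rG mu"
  have m: "mu \<in> MG" using goodT_D[OF h(8)] by simp
  show ?thesis using h assoc[OF h(3,4) m h(5)] cp_dg[OF h(3,4,5)] by (simp add: add.assoc)
next
  fix l mu n mu1 f1 n1 mu' f' n' assume h: "X = Inl l" "Y = Inr (mu,0,n)" "l \<in> MG" "goodT (mu,0,n)" "sG l = rG mu"
    "Y = Inr (mu1,f1,n1)" "Z = Inr (mu',f',n')" "goodT (mu1,f1,n1)" "goodT (mu',f',n')" "sG mu1 = rG mu'"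
  have m: "mu \<in> MG" "mu' \<in> MG" using goodT_D h by auto
  show ?thesis using h assoc[OF h(3) m(1,2) h(5)] by (simp add: add.assoc)
next
  fix mu f n mu' f' n' mu1 f1 n1 mu2 f2 n2
  assume h: "X = Inr (mu,f,n)" "Y = Inr (mu',f',n')" "goodT (mu,f,n)" "goodT (mu',f',n')" "sG mu = rG mu'"
    "Y = Inr (mu1,f1,n1)" "Z = Inr (mu2,f2,n2)" "goodT (mu2,f2,n2)" "sG mu1 = rG mu2"
  have m: "mu \<in> MG" "mu' \<in> MG" "mu2 \<in> MG" using goodT_D h by auto
  show ?thesis using h assoc[OF m h(5)] by (simp add: add.assoc)
qed (auto)

lemma ab_idl: "goodM X \<Longrightarrow> abs_cp (abs_id (abs_rg X)) X = X"
proof (erule goodM_cases)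
  fix l assume "X = Inl l" "l \<in> MG" then show ?thesis using idl by simp
next
  fix mu f n assume h: "X = Inr (mu,f,n)" "goodT (mu,f,n)"
  have m: "mu \<in> MG" "rG mu \<in> OG" using goodT_D[OF h(2)] mor_rs by auto
  show ?thesis using h idl[OF m(1)] id_props[OF m(2)] by simp
qed

lemma ab_idr: "goodM X \<Longrightarrow> abs_cp X (abs_id (abs_sr X)) = X"
proof (erule goodM_cases)
  fix l assume "X = Inl l" "l \<in> MG" then show ?thesis using idr by simp
next
  fix mu f n assume h: "X = Inr (mu,f,n)" "goodT (mu,f,n)"
  have m: "mu \<in> MG" using goodT_D[OF h(2)] by auto
  show ?thesis using h idr[OF m(1)] by simp
qed

lemma ab_id: "goodO v \<Longrightarrow> abs_rg (abs_id v) = v \<and> abs_sr (abs_id v) = v \<and> abs_dg (abs_id v) = 0"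
proof (cases v)
  case (Inl w) assume "goodO v" then show ?thesis using Inl id_props by (simp add: goodO_def)
next
  case (Inr t) assume g: "goodO v"
  obtain w f where t: "t = (w,f)" by fastforce
  have "w \<in> OG" "f \<noteq> 0" using g Inr t by (auto simp: goodO_def goodV_def)
  then show ?thesis using Inr t id_props by simp
qed

lemma min_deg:
  assumes "goodT (mu1,f1,n1)" "goodT (mu2,f2,n2)" "f2 = f1 + n1 - dG mu1"
  shows "dG mu1 i = min (dG mu1 i + dG mu2 i) (n1 i)"
proof -
  have a: "dG mu1 i \<le> n1 i" using goodT_D[OF assms(1)] by (simp add: le_fun_def)
  show ?thesis
  proof (cases "dG mu1 i < n1 i")
    case True
    then have "f2 i \<noteq> 0" using assms(3) by simp
    then have "dG mu2 i = 0" using goodT_D[OF assms(2)] by simp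
    then show ?thesis using a by simp
  next
    case False then show ?thesis using a by simp
  qed
qed

lemma ab_uniq:
  assumes "abs_sr F = abs_rg H" "abs_sr F' = abs_rg H'" "goodM F" "goodM H" "goodM F'" "goodM H'"
    "abs_cp F H = abs_cp F' H'" "abs_dg F = abs_dg F'"
  shows "F = F' \<and> H = H'"
  using match_cases[OF assms(1,3,4)] match_cases[OF assms(2,5,6)]
proof (elim disjE exE conjE)
  fix l1 l2 l1' l2' assume h: "F = Inl l1" "H = Inl l2" "l1 \<in> MG" "l2 \<in> MG" "sG l1 = rG l2"
    "F' = Inl l1'" "H' = Inl l2'" "l1' \<in> MG" "l2' \<in> MG" "sG l1' = rG l2'"
  then show ?thesis using assms(7,8) fact_uniq[OF h(3,4,8,9,5,10)] by simp
next
  fix l mu n l' mu' n' assume h: "F = Inl l" "H = Inr (mu,0,n)" "l \<in> MG" "goodT (mu,0,n)" "sG l = rG mu"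
    "F' = Inl l'" "H' = Inr (mu',0,n')" "l' \<in> MG" "goodT (mu',0,n')" "sG l' = rG mu'"
  have m: "mu \<in> MG" "mu' \<in> MG" using h goodT_D by auto
  have e: "cG l mu = cG l' mu'" "dG l + n = dG l' + n'" "dG l = dG l'" using assms(7,8) h by auto
  then show ?thesis using fact_uniq[OF h(3) m(1) h(8) m(2) h(5) h(10)] h by simp
next
  fix l mu n mu1 f1 n1 mu2 f2 n2 assume h: "F = Inl l" "H = Inr (mu,0,n)" "l \<in> MG" "goodT (mu,0,n)" "sG l = rG mu"
    "F' = Inr (mu1,f1,n1)" "H' = Inr (mu2,f2,n2)" "goodT (mu1,f1,n1)" "goodT (mu2,f2,n2)" "sG mu1 = rG mu2"
    "f2 = f1 + n1 - dG mu1" "f2 \<noteq> 0"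
  have m: "mu \<in> MG" "mu1 \<in> MG" "mu2 \<in> MG" using h goodT_D by auto
  have e: "cG l mu = cG mu1 mu2" "f1 = 0" "dG l = n1" using assms(7,8) h by auto
  obtain i where i: "f2 i \<noteq> 0" using h(12) by (auto simp: fun_eq_iff)
  have "dG mu2 i = 0" using goodT_D[OF h(9)] i by simp
  moreover have "dG mu1 i < n1 i" using i h(11) e(2) by simp
  moreover have "dG (cG l mu) i = dG l i + dG mu i" using cp_dg[OF h(3) m(1) h(5)] by simp
  moreover have "dG (cG mu1 mu2) i = dG mu1 i + dG mu2 i" using cp_dg[OF m(2,3) h(10)] by simp
  ultimately show ?thesis using e by simp
next
  fix l mu n mu1 f1 n1 mu2 f2 n2 assume h: "F' = Inl l" "H' = Inr (mu,0,n)" "l \<in> MG" "goodT (mu,0,n)" "sG l = rG mu"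
    "F = Inr (mu1,f1,n1)" "H = Inr (mu2,f2,n2)" "goodT (mu1,f1,n1)" "goodT (mu2,f2,n2)" "sG mu1 = rG mu2"
    "f2 = f1 + n1 - dG mu1" "f2 \<noteq> 0"
  have m: "mu \<in> MG" "mu1 \<in> MG" "mu2 \<in> MG" using h goodT_D by auto
  have e: "cG l mu = cG mu1 mu2" "f1 = 0" "dG l = n1" using assms(7,8) h by auto
  obtain i where i: "f2 i \<noteq> 0" using h(12) by (auto simp: fun_eq_iff)
  have "dG mu2 i = 0" using goodT_D[OF h(9)] i by simp
  moreover have "dG mu1 i < n1 i" using i h(11) e(2) by simp
  moreover have "dG (cG l mu) i = dG l i + dG mu i" using cp_dg[OF h(3) m(1) h(5)] by simp
  moreover have "dG (cG mu1 mu2) i = dG mu1 i + dG mu2 i" using cp_dg[OF m(2,3) h(10)] by simp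
  ultimately show ?thesis using e by simp
next
  fix mu1 f1 n1 mu2 f2 n2 nu1 g1 m1 nu2 g2 m2
  assume h: "F = Inr (mu1,f1,n1)" "H = Inr (mu2,f2,n2)" "goodT (mu1,f1,n1)" "goodT (mu2,f2,n2)" "sG mu1 = rG mu2"
    "f2 = f1 + n1 - dG mu1" "f2 \<noteq> 0"
    "F' = Inr (nu1,g1,m1)" "H' = Inr (nu2,g2,m2)" "goodT (nu1,g1,m1)" "goodT (nu2,g2,m2)" "sG nu1 = rG nu2"
    "g2 = g1 + m1 - dG nu1" "g2 \<noteq> 0"
  have m: "mu1 \<in> MG" "mu2 \<in> MG" "nu1 \<in> MG" "nu2 \<in> MG" using h goodT_D by auto
  have e: "cG mu1 mu2 = cG nu1 nu2" "f1 = g1" "n1 + n2 = m1 + m2" "n1 = m1" using assms(7,8) h by auto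
  have dd: "dG mu1 = dG nu1"
  proof (rule ext)
    fix i
    have "dG (cG mu1 mu2) i = dG (cG nu1 nu2) i" using e by simp
    then have "dG mu1 i + dG mu2 i = dG nu1 i + dG nu2 i" using cp_dg[OF m(1,2) h(5)] cp_dg[OF m(3,4) h(12)] by simp
    then show "dG mu1 i = dG nu1 i" using min_deg[OF h(3,4,6), of i] min_deg[OF h(10,11,13), of i] e(4) by simp
  qed
  have "mu1 = nu1 \<and> mu2 = nu2" using fact_uniq[OF m h(5) h(12) e(1) dd] .
  then show ?thesis using h e dd by simp
qed (use assms(7) in auto)

lemma Pcls_mor: "u \<in> P_set G \<Longrightarrow> Inr (Pcls G u) \<in> kmor E \<and> absM (Inr (Pcls G u)) = Inr (pinv u)"
  using rep_P unfolding E_mor Ptilde_def by auto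

lemma E_match: "a \<in> kmor E \<Longrightarrow> b \<in> kmor E \<Longrightarrow> (ksr E a = krg E b) = (abs_sr (absM a) = abs_rg (absM b))"
  using absV_inj[OF E_sr_obj E_rg_obj] abs_sr_E abs_rg_E by metis

lemma E_cp:
  assumes a: "a \<in> kmor E" and b: "b \<in> kmor E" and ab: "ksr E a = krg E b"
  shows "kcp E a b \<in> kmor E \<and> krg E (kcp E a b) = krg E a \<and> ksr E (kcp E a b) = ksr E b
     \<and> kdg E (kcp E a b) = kdg E a + kdg E b"
proof -
  have c: "kcp E a b \<in> kmor E" "absM (kcp E a b) = abs_cp (absM a) (absM b)" using abs_cp_E[OF a b ab] by auto
  have m: "abs_sr (absM a) = abs_rg (absM b)" using E_match[OF a b] ab by simp
  have g: "goodM (absM a)" "goodM (absM b)" using absM_good a b by auto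
  have "absV (krg E (kcp E a b)) = absV (krg E a)"
    using abs_rg_E[OF c(1)] abs_rg_E[OF a] c(2) ab_rg_cp[OF m g] by simp
  then have 1: "krg E (kcp E a b) = krg E a" using absV_inj E_rg_obj c(1) a by blast
  have "absV (ksr E (kcp E a b)) = absV (ksr E b)"
    using abs_sr_E[OF c(1)] abs_sr_E[OF b] c(2) ab_sr_cp[OF m g] by simp
  then have 2: "ksr E (kcp E a b) = ksr E b" using absV_inj E_sr_obj c(1) b by blast
  have 3: "kdg E (kcp E a b) = kdg E a + kdg E b"
    using abs_dg_E[OF c(1)] abs_dg_E[OF a] abs_dg_E[OF b] c(2) ab_dg_cp[OF m g] by simp
  show ?thesis using c 1 2 3 by simp
qed

lemma E_id:
  assumes v: "v \<in> kobj E"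
  shows "kid E v \<in> kmor E \<and> krg E (kid E v) = v \<and> ksr E (kid E v) = v \<and> kdg E (kid E v) = 0"
proof -
  have i: "kid E v \<in> kmor E" "absM (kid E v) = abs_id (absV v)" using abs_id_E[OF v] by auto
  have g: "goodO (absV v)" using absV_good[OF v] .
  have "absV (krg E (kid E v)) = absV v" using abs_rg_E[OF i(1)] i(2) ab_id[OF g] by simp
  then have 1: "krg E (kid E v) = v" using absV_inj E_rg_obj i(1) v by blast
  have "absV (ksr E (kid E v)) = absV v" using abs_sr_E[OF i(1)] i(2) ab_id[OF g] by simp
  then have 2: "ksr E (kid E v) = v" using absV_inj E_sr_obj i(1) v by blast
  have 3: "kdg E (kid E v) = 0" using abs_dg_E[OF i(1)] i(2) ab_id[OF g] by simp
  show ?thesis using i 1 2 3 by simp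
qed

lemma E_assoc:
  assumes a: "a \<in> kmor E" and b: "b \<in> kmor E" and c: "c \<in> kmor E"
    and ab: "ksr E a = krg E b" and bc: "ksr E b = krg E c"
  shows "kcp E (kcp E a b) c = kcp E a (kcp E b c)"
proof -
  have ab': "kcp E a b \<in> kmor E" "ksr E (kcp E a b) = krg E c" using E_cp[OF a b ab] bc by auto
  have bc': "kcp E b c \<in> kmor E" "ksr E a = krg E (kcp E b c)" using E_cp[OF b c bc] ab by auto
  have l: "kcp E (kcp E a b) c \<in> kmor E" "absM (kcp E (kcp E a b) c) = abs_cp (abs_cp (absM a) (absM b)) (absM c)"
    using abs_cp_E[OF ab'(1) c ab'(2)] abs_cp_E[OF a b ab] by auto
  have r: "kcp E a (kcp E b c) \<in> kmor E" "absM (kcp E a (kcp E b c)) = abs_cp (absM a) (abs_cp (absM b) (absM c))"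
    using abs_cp_E[OF a bc'(1) bc'(2)] abs_cp_E[OF b c bc] by auto
  have "abs_cp (abs_cp (absM a) (absM b)) (absM c) = abs_cp (absM a) (abs_cp (absM b) (absM c))"
    using ab_assoc E_match[OF a b] E_match[OF b c] ab bc absM_good a b c by simp
  then show ?thesis using absM_inj l r by simp
qed

lemma E_idl: "a \<in> kmor E \<Longrightarrow> kcp E (kid E (krg E a)) a = a"
proof -
  assume a: "a \<in> kmor E"
  have v: "krg E a \<in> kobj E" using E_rg_obj[OF a] .
  have i: "kid E (krg E a) \<in> kmor E" "ksr E (kid E (krg E a)) = krg E a" "absM (kid E (krg E a)) = abs_id (absV (krg E a))"
    using E_id[OF v] abs_id_E[OF v] by auto
  have "absM (kcp E (kid E (krg E a)) a) = absM a" "kcp E (kid E (krg E a)) a \<in> kmor E"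
    using abs_cp_E[OF i(1) a i(2)] i(3) abs_rg_E[OF a] ab_idl absM_good[OF a] by auto
  then show ?thesis using absM_inj a by blast
qed

lemma E_idr: "a \<in> kmor E \<Longrightarrow> kcp E a (kid E (ksr E a)) = a"
proof -
  assume a: "a \<in> kmor E"
  have v: "ksr E a \<in> kobj E" using E_sr_obj[OF a] .
  have i: "kid E (ksr E a) \<in> kmor E" "krg E (kid E (ksr E a)) = ksr E a" "absM (kid E (ksr E a)) = abs_id (absV (ksr E a))"
    using E_id[OF v] abs_id_E[OF v] by auto
  have "absM (kcp E a (kid E (ksr E a))) = absM a" "kcp E a (kid E (ksr E a)) \<in> kmor E"
    using abs_cp_E[OF a i(1) i(2)[symmetric]] i(3) abs_sr_E[OF a] ab_idr absM_good[OF a] by auto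
  then show ?thesis using absM_inj a by blast
qed

lemma E_fact_uniq:
  assumes "f \<in> kmor E" "g \<in> kmor E" "f' \<in> kmor E" "g' \<in> kmor E" "ksr E f = krg E g" "ksr E f' = krg E g'"
    "kcp E f g = kcp E f' g'" "kdg E f = kdg E f'"
  shows "f = f' \<and> g = g'"
proof -
  have "abs_cp (absM f) (absM g) = abs_cp (absM f') (absM g')"
    using abs_cp_E[OF assms(1,2,5)] abs_cp_E[OF assms(3,4,6)] assms(7) by metis
  moreover have "abs_dg (absM f) = abs_dg (absM f')" using abs_dg_E assms by metis
  ultimately have "absM f = absM f' \<and> absM g = absM g'"
    using ab_uniq E_match assms absM_good by meson
  then show ?thesis using absM_inj assms by blast
qed

lemma E_fact_ex:
  assumes l: "l \<in> kmor E" and d: "kdg E l = m + n"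
  shows "\<exists>f g. f \<in> kmor E \<and> g \<in> kmor E \<and> ksr E f = krg E g \<and> kcp E f g = l \<and> kdg E f = m \<and> kdg E g = n"
proof (rule E_mor_cases[OF l])
  fix la assume h: "l = Inl la" "la \<in> MG"
  then have "dG la = m + n" using d E_dg_l by simp
  then obtain a b where ab: "a \<in> MG" "b \<in> MG" "sG a = rG b" "cG a b = la" "dG a = m" "dG b = n"
    using fact_ex[OF h(2)] by blast
  show ?thesis
    by (rule exI[of _ "Inl a"], rule exI[of _ "Inl b"]) (simp add: ab h E_mor E_sr_l E_rg_l E_cp_ll E_dg_l)
next
  fix c m0 x a b assume h: "l = Inr c" "c \<in> Ptilde G" "rep c = ((m0,x),a,b)" "((m0,x),a,b) \<in> P_set G"
  have dd: "is_gm G (m0,x)" "is_bp G (m0,x)" "a \<le> b" "\<not> le_en b m0" using pset_D[OF h(4)] by auto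
  have bam: "b - a = m + n" using d h E_dg_r by simp
  define c1 where "c1 = a + m"
  have ac1: "a \<le> c1" unfolding c1_def by (simp add: le_fun_def)
  have c1b: "c1 \<le> b" "b - c1 = n" "c1 - a = m"
  proof -
    have e: "\<And>i. b i = a i + m i + n i"
    proof -
      fix i have "b i - a i = m i + n i" "a i \<le> b i" using fun_cong[OF bam, of i] le_funD[OF dd(3), of i] by auto
      then show "b i = a i + m i + n i" by simp
    qed
    show "c1 \<le> b" unfolding c1_def by (rule le_funI) (simp add: e)
    show "b - c1 = n" "c1 - a = m" unfolding c1_def by (auto simp: fun_eq_iff e)
  qed
  have u2: "((m0,x),c1,b) \<in> P_set G" using dd c1b unfolding P_set_def is_bp_def by simp
  define g where "g = (Inr (Pcls G ((m0,x),c1,b)) :: 'a + ('a, 'k) pcls)"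
  have g: "g \<in> kmor E" "absM g = Inr (pinv ((m0,x),c1,b))" using Pcls_mor[OF u2] g_def by auto
  have lM: "absM l = Inr (pinv ((m0,x),a,b))" using h by simp
  note pf2 = pset_facts[OF u2]
  let ?A = "meet_en a m0" let ?B = "meet_en b m0" let ?C = "meet_en c1 m0"
  have Bm: "le_en ?B m0" by (rule meet_le_en)
  have AC: "?A \<le> ?C" "?C \<le> ?B" using meet_mono ac1 c1b(1) by auto
  have cpx: "cG (x ?A ?C) (x ?C ?B) = x ?A ?B" using gm_cp2[OF dd(1) AC Bm] .
  have dg: "kdg E g = n" using abs_dg_E[OF g(1)] g(2) c1b by (simp add: pinv_simp)
  show ?thesis
  proof (cases "le_en c1 m0")
    case True
    have am: "le_en a m0" using le_en_mono[OF ac1 True] .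
    have mA: "?A = a" "?C = c1" using meet_id am True by auto
    define f where "f = (Inl (x a c1) :: 'a + ('a, 'k) pcls)"
    have xm: "x a c1 \<in> MG" "dG (x a c1) = c1 - a" "sG (x a c1) = vtx G x c1"
      using gm_mor[OF dd(1) ac1 True] gm_dg[OF dd(1) ac1 True] gm_sr[OF dd(1) ac1 True] by auto
    have f: "f \<in> kmor E" "absM f = Inl (x a c1)" unfolding f_def E_mor using xm by auto
    have m1: "abs_sr (absM f) = abs_rg (absM g)"
      using f(2) g(2) pf2(6) xm(3) True le_en_iff_diff[of c1 m0] mA by (simp add: pinv_simp)
    have fg: "ksr E f = krg E g" using E_match[OF f(1) g(1)] m1 by simp
    have "absM (kcp E f g) = abs_cp (absM f) (absM g)" "kcp E f g \<in> kmor E" using abs_cp_E[OF f(1) g(1) fg] by auto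
    moreover have "abs_cp (absM f) (absM g) = absM l"
      using f(2) g(2) lM xm(2) mA cpx c1b le_en_iff_diff[of a m0] am bam by (simp add: pinv_simp)
    ultimately have "kcp E f g = l" using absM_inj l by metis
    moreover have "kdg E f = m" using f_def xm(2) c1b E_dg_l by simp
    ultimately show ?thesis using f(1) g(1) fg dg by blast
  next
    case False
    have u1: "((m0,x),a,c1) \<in> P_set G" using dd ac1 False unfolding P_set_def is_bp_def by simp
    define f where "f = (Inr (Pcls G ((m0,x),a,c1)) :: 'a + ('a, 'k) pcls)"
    have f: "f \<in> kmor E" "absM f = Inr (pinv ((m0,x),a,c1))" using Pcls_mor[OF u1] f_def by auto
    note pf1 = pset_facts[OF u1]
    have nz: "c1 - ?C \<noteq> 0" using False le_en_iff_diff[of c1 m0] by simp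
    have m1: "abs_sr (absM f) = abs_rg (absM g)"
      using f(2) g(2) pf1(7,9) pf2(6) nz by (simp add: pinv_simp)
    have fg: "ksr E f = krg E g" using E_match[OF f(1) g(1)] m1 by simp
    have "absM (kcp E f g) = abs_cp (absM f) (absM g)" "kcp E f g \<in> kmor E" using abs_cp_E[OF f(1) g(1) fg] by auto
    moreover have "abs_cp (absM f) (absM g) = absM l"
      using f(2) g(2) lM cpx c1b bam by (simp add: pinv_simp)
    ultimately have "kcp E f g = l" using absM_inj l by metis
    moreover have "kdg E f = m" using abs_dg_E[OF f(1)] f(2) c1b by (simp add: pinv_simp)
    ultimately show ?thesis using f(1) g(1) fg dg by blast
  qed
qed

lemma E_kgraph: "k_graph E"
proof -
  have cV: "countable (Vtilde G)"
  proof (rule countable_image_inj_on)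
    show "inj_on (\<lambda>c. vinv (rep c)) (Vtilde G)" by (rule inj_onI) (rule Vtilde_inj)
    have sub: "(\<lambda>c. vinv (rep c)) ` Vtilde G \<subseteq> OG \<times> UNIV"
    proof
      fix w assume "w \<in> (\<lambda>c. vinv (rep c)) ` Vtilde G"
      then obtain c where c: "c \<in> Vtilde G" "w = vinv (rep c)" by blast
      have "Inr c \<in> kobj E" using c E_obj by auto
      then have "goodO (absV (Inr c))" by (rule absV_good)
      then show "w \<in> OG \<times> UNIV" using c by (auto simp: goodO_def goodV_def split: prod.splits)
    qed
    have "countable (OG \<times> (UNIV :: ('k \<Rightarrow> nat) set))" using cntO by simp
    then show "countable ((\<lambda>c. vinv (rep c)) ` Vtilde G)" by (rule countable_subset[OF sub])
  qed
  have cP: "countable (Ptilde G)"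
  proof (rule countable_image_inj_on)
    show "inj_on (\<lambda>c. pinv (rep c)) (Ptilde G)" by (rule inj_onI) (rule Ptilde_inj)
    have sub: "(\<lambda>c. pinv (rep c)) ` Ptilde G \<subseteq> MG \<times> UNIV"
    proof
      fix w assume "w \<in> (\<lambda>c. pinv (rep c)) ` Ptilde G"
      then obtain c where c: "c \<in> Ptilde G" "w = pinv (rep c)" by blast
      have "Inr c \<in> kmor E" using c E_mor by auto
      then have "goodM (absM (Inr c))" by (rule absM_good)
      then show "w \<in> MG \<times> UNIV" using c by (auto simp: goodM_def goodT_def split: prod.splits)
    qed
    have "countable (MG \<times> (UNIV :: (('k \<Rightarrow> nat) \<times> ('k \<Rightarrow> nat)) set))" using cntM by simp
    then show "countable ((\<lambda>c. pinv (rep c)) ` Ptilde G)" by (rule countable_subset[OF sub])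
  qed
  have 1: "countable (kobj E)" unfolding E_obj using cntO cV by simp
  have 2: "countable (kmor E)" unfolding E_mor using cntM cP by simp
  have 8: "\<forall>l\<in>kmor E. \<forall>m n. kdg E l = m + n \<longrightarrow>
         (\<exists>!p. p \<in> kmor E \<times> kmor E \<and> ksr E (fst p) = krg E (snd p)
               \<and> kcp E (fst p) (snd p) = l \<and> kdg E (fst p) = m \<and> kdg E (snd p) = n)"
  proof (intro ballI allI impI)
    fix l m n assume l: "l \<in> kmor E" and d: "kdg E l = m + n"
    obtain f g where fg: "f \<in> kmor E" "g \<in> kmor E" "ksr E f = krg E g" "kcp E f g = l" "kdg E f = m" "kdg E g = n"
      using E_fact_ex[OF l d] by blast
    show "\<exists>!p. p \<in> kmor E \<times> kmor E \<and> ksr E (fst p) = krg E (snd p)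
               \<and> kcp E (fst p) (snd p) = l \<and> kdg E (fst p) = m \<and> kdg E (snd p) = n"
    proof (rule ex1I[of _ "(f,g)"])
      show "(f,g) \<in> kmor E \<times> kmor E \<and> ksr E (fst (f,g)) = krg E (snd (f,g))
               \<and> kcp E (fst (f,g)) (snd (f,g)) = l \<and> kdg E (fst (f,g)) = m \<and> kdg E (snd (f,g)) = n"
        using fg by simp
      fix p assume p: "p \<in> kmor E \<times> kmor E \<and> ksr E (fst p) = krg E (snd p)
               \<and> kcp E (fst p) (snd p) = l \<and> kdg E (fst p) = m \<and> kdg E (snd p) = n"
      then have "fst p = f \<and> snd p = g" using E_fact_uniq[of "fst p" "snd p" f g] fg by auto
      then show "p = (f,g)" by (simp add: prod_eq_iff)
    qed
  qed
  show ?thesis unfolding k_graph_def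
    apply (intro conjI)
    subgoal by (rule 1)
    subgoal by (rule 2)
    subgoal by (simp add: E_rg_obj E_sr_obj)
    subgoal by (simp add: E_id)
    subgoal by (simp add: E_cp)
    subgoal by (simp add: E_assoc)
    subgoal by (simp add: E_idl E_idr)
    subgoal by (rule 8)
    done
qed

definition extends :: "'a \<Rightarrow> 'a \<Rightarrow> bool" where
  "extends a b = (a \<in> MG \<and> (\<exists>nu\<in>MG. sG a = rG nu \<and> b = cG a nu))"

lemma ext_refl: "a \<in> MG \<Longrightarrow> extends a a"
  unfolding extends_def using idr mor_rs id_props by (metis (no_types, lifting))

lemma ext_trans: "extends a b \<Longrightarrow> extends b c \<Longrightarrow> extends a c"
proof -
  assume ab: "extends a b" and bc: "extends b c"
  obtain n1 where n1: "a \<in> MG" "n1 \<in> MG" "sG a = rG n1" "b = cG a n1" using ab unfolding extends_def by blast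
  obtain n2 where n2: "n2 \<in> MG" "sG b = rG n2" "c = cG b n2" using bc unfolding extends_def by blast
  have s: "sG n1 = rG n2" using n2(2) cp_sr[OF n1(1-3)] n1(4) by simp
  have "c = cG a (cG n1 n2)" using assoc[OF n1(1,2) n2(1) n1(3) s] n1(4) n2(3) by simp
  moreover have "cG n1 n2 \<in> MG" "rG (cG n1 n2) = rG n1" using cp_mor[OF n1(2) n2(1) s] cp_rg[OF n1(2) n2(1) s] by auto
  ultimately show ?thesis unfolding extends_def using n1 by (intro conjI bexI[of _ "cG n1 n2"]) auto
qed

lemma ext_mor: "extends a b \<Longrightarrow> a \<in> MG \<and> b \<in> MG \<and> rG b = rG a \<and> dG a \<le> dG b"
proof -
  assume ab: "extends a b"
  obtain n1 where n1: "a \<in> MG" "n1 \<in> MG" "sG a = rG n1" "b = cG a n1" using ab unfolding extends_def by blast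
  then show ?thesis using cp_mor[OF n1(1-3)] cp_rg[OF n1(1-3)] cp_dg[OF n1(1-3)] by (simp add: le_fun_def)
qed

lemma ext_seg: "extends a b \<Longrightarrow> p \<le> q \<Longrightarrow> q \<le> dG a \<Longrightarrow> seg G b p q = seg G a p q"
proof -
  assume ab: "extends a b" "p \<le> q" "q \<le> dG a"
  obtain n1 where n1: "a \<in> MG" "n1 \<in> MG" "sG a = rG n1" "b = cG a n1" using ab unfolding extends_def by blast
  then show ?thesis using seg_ext[OF n1(1-3) ab(2,3)] by simp
qed

definition ext1 :: "'a \<Rightarrow> 'k \<Rightarrow> 'a" where
  "ext1 lam i = (if \<exists>e\<in>MG. rG e = sG lam \<and> dG e = e_vec i
     then cG lam (SOME e. e \<in> MG \<and> rG e = sG lam \<and> dG e = e_vec i) else lam)"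

lemma ext1_props: "lam \<in> MG \<Longrightarrow> extends lam (ext1 lam i) \<and>
   (dG (ext1 lam i) i = dG lam i \<longrightarrow> \<not> (\<exists>e\<in>MG. rG e = sG lam \<and> dG e = e_vec i))"
proof -
  assume l: "lam \<in> MG"
  show ?thesis
  proof (cases "\<exists>e\<in>MG. rG e = sG lam \<and> dG e = e_vec i")
    case True
    let ?e = "SOME e. e \<in> MG \<and> rG e = sG lam \<and> dG e = e_vec i"
    have e: "?e \<in> MG \<and> rG ?e = sG lam \<and> dG ?e = e_vec i" using True by (metis (mono_tags, lifting) someI_ex)
    have x: "ext1 lam i = cG lam ?e" unfolding ext1_def using True by simp
    have "dG (ext1 lam i) i = dG lam i + 1" unfolding x using cp_dg[OF l] e by (simp add: e_vec_def)
    moreover have "extends lam (ext1 lam i)" unfolding extends_def x using l e by (intro conjI bexI[of _ ?e]) auto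
    ultimately show ?thesis by simp
  next
    case False
    then have "ext1 lam i = lam" unfolding ext1_def by (rule if_not_P)
    then show ?thesis using ext_refl[OF l] False by simp
  qed
qed

lemma foldl_ext: "lam \<in> MG \<Longrightarrow> extends lam (foldl ext1 lam L) \<and>
   (\<forall>i\<in>set L. \<exists>l'. extends lam l' \<and> extends (ext1 l' i) (foldl ext1 lam L))"
proof (induction L arbitrary: lam)
  case Nil then show ?case using ext_refl by simp
next
  case (Cons i L)
  have e1: "extends lam (ext1 lam i)" using ext1_props[OF Cons.prems] by simp
  have m1: "ext1 lam i \<in> MG" using ext_mor[OF e1] by simp
  note IH = Cons.IH[OF m1]
  have A: "extends lam (foldl ext1 lam (i # L))" using ext_trans[OF e1] IH by simp
  have B: "\<forall>j\<in>set (i # L). \<exists>l'. extends lam l' \<and> extends (ext1 l' j) (foldl ext1 lam (i # L))"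
  proof
    fix j assume j: "j \<in> set (i # L)"
    show "\<exists>l'. extends lam l' \<and> extends (ext1 l' j) (foldl ext1 lam (i # L))"
    proof (cases "j \<in> set L")
      case True
      then obtain l' where "extends (ext1 lam i) l'" "extends (ext1 l' j) (foldl ext1 (ext1 lam i) L)" using IH by blast
      then show ?thesis using ext_trans[OF e1] by auto
    next
      case False
      then have "j = i" using j by simp
      then show ?thesis using ext_refl[OF Cons.prems] IH by auto
    qed
  qed
  show ?case using A B by blast
qed

definition Lk :: "'k list" where "Lk = (SOME L. set L = UNIV)"

lemma Lk_set: "set Lk = UNIV"
  unfolding Lk_def by (rule someI_ex) (rule finite_list, simp)

definition stepF :: "'a \<Rightarrow> 'a" where "stepF lam = foldl ext1 lam Lk"

definition lseq :: "'v \<Rightarrow> nat \<Rightarrow> 'a" where "lseq w j = (stepF ^^ j) (iG w)"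

lemma lseq_Suc: "lseq w (Suc j) = stepF (lseq w j)" by (simp add: lseq_def)

lemma lseq_mor: "w \<in> OG \<Longrightarrow> lseq w j \<in> MG \<and> rG (lseq w j) = w"
proof (induction j)
  case 0 then show ?case using id_props by (simp add: lseq_def)
next
  case (Suc j)
  then have "extends (lseq w j) (lseq w (Suc j))" unfolding lseq_Suc stepF_def using foldl_ext by blast
  then show ?case using ext_mor Suc by auto
qed

lemma lseq_ext0: "w \<in> OG \<Longrightarrow> extends (lseq w j) (lseq w (j + k))"
proof (induction k)
  case 0 then show ?case using ext_refl lseq_mor by simp
next
  case (Suc k)
  have "extends (lseq w (j + k)) (lseq w (Suc (j + k)))" unfolding lseq_Suc stepF_def
    using foldl_ext lseq_mor Suc.prems by blast
  then show ?case using ext_trans Suc by simp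
qed

lemma lseq_ext: "w \<in> OG \<Longrightarrow> j \<le> j' \<Longrightarrow> extends (lseq w j) (lseq w j')"
  using lseq_ext0[of w j "j' - j"] by simp

lemma lseq_mono: "w \<in> OG \<Longrightarrow> j \<le> j' \<Longrightarrow> dG (lseq w j) \<le> dG (lseq w j')"
  using lseq_ext ext_mor by blast

definition bm :: "'v \<Rightarrow> 'k \<Rightarrow> enat" where "bm w = (\<lambda>i. SUP j. enat (dG (lseq w j) i))"
definition bx :: "'v \<Rightarrow> ('k \<Rightarrow> nat) \<Rightarrow> ('k \<Rightarrow> nat) \<Rightarrow> 'a" where
  "bx w = (\<lambda>p q. seg G (lseq w (LEAST j. q \<le> dG (lseq w j))) p q)"

lemma coord_reach: fixes f :: "nat \<Rightarrow> nat" shows "enat n \<le> (SUP j. enat (f j)) \<Longrightarrow> \<exists>j. n \<le> f j"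
proof (rule ccontr)
  assume a: "enat n \<le> (SUP j. enat (f j))" and b: "\<not> (\<exists>j. n \<le> f j)"
  then have "\<And>j. f j < n" using not_le by blast
  then have "\<And>j. f j \<le> n - 1" by (metis Suc_diff_1 gr0I less_Suc_eq_le not_less0)
  then have "(SUP j. enat (f j)) \<le> enat (n - 1)" by (intro SUP_least) auto
  then have "n \<le> n - 1" using a by (metis enat_ord_simps(1) order_trans)
  moreover have "0 < n" using \<open>\<And>j. f j < n\<close>[of 0] by simp
  ultimately show False by simp
qed

lemma bx_eq: "w \<in> OG \<Longrightarrow> p \<le> q \<Longrightarrow> q \<le> dG (lseq w j) \<Longrightarrow> bx w p q = seg G (lseq w j) p q"
proof -
  assume a: "w \<in> OG" "p \<le> q" "q \<le> dG (lseq w j)"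
  let ?j0 = "LEAST j. q \<le> dG (lseq w j)"
  have 1: "q \<le> dG (lseq w ?j0)" using LeastI[of "\<lambda>j. q \<le> dG (lseq w j)"] a(3) by blast
  have 2: "?j0 \<le> j" using Least_le[of "\<lambda>j. q \<le> dG (lseq w j)"] a(3) by blast
  show ?thesis unfolding bx_def using ext_seg[OF lseq_ext[OF a(1) 2] a(2) 1] by simp
qed

lemma le_bm_iff: "w \<in> OG \<Longrightarrow> le_en q (bm w) = (\<exists>j. q \<le> dG (lseq w j))"
proof
  assume w: "w \<in> OG" and q: "le_en q (bm w)"
  have "\<forall>i. \<exists>j. q i \<le> dG (lseq w j) i"
  proof
    fix i have "enat (q i) \<le> (SUP j. enat (dG (lseq w j) i))" using q unfolding le_en_def bm_def by simp
    then show "\<exists>j. q i \<le> dG (lseq w j) i" by (rule coord_reach)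
  qed
  then obtain J where J: "\<And>i. q i \<le> dG (lseq w (J i)) i" by metis
  define jm where "jm = Max (range J)"
  have "\<And>i. J i \<le> jm" unfolding jm_def by (rule Max_ge) auto
  then have "\<And>i. q i \<le> dG (lseq w jm) i" using J lseq_mono[OF w] le_funD order_trans by metis
  then show "\<exists>j. q \<le> dG (lseq w j)" by (auto simp: le_fun_def)
next
  assume "\<exists>j. q \<le> dG (lseq w j)"
  then obtain j where j: "q \<le> dG (lseq w j)" by blast
  show "le_en q (bm w)" unfolding le_en_def bm_def
  proof
    fix i have "enat (q i) \<le> enat (dG (lseq w j) i)" using j by (simp add: le_fun_def)
    then show "enat (q i) \<le> (SUP j. enat (dG (lseq w j) i))" by (rule SUP_upper2[OF UNIV_I])
  qed
qed

lemma bx_gm: "w \<in> OG \<Longrightarrow> is_gm G (bm w, bx w)"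
proof -
  assume w: "w \<in> OG"
  have A: "\<forall>p q. p \<le> q \<and> le_en q (bm w) \<longrightarrow> bx w p q \<in> MG \<and> dG (bx w p q) = q - p"
  proof (intro allI impI)
    fix p q assume h: "p \<le> q \<and> le_en q (bm w)"
    then obtain j where j: "q \<le> dG (lseq w j)" using le_bm_iff[OF w] by blast
    show "bx w p q \<in> MG \<and> dG (bx w p q) = q - p"
      using bx_eq[OF w _ j] seg_mor[OF lseq_mor[OF w, THEN conjunct1] _ j] h by auto
  qed
  have B: "\<forall>p. le_en p (bm w) \<longrightarrow> bx w p p = iG (rG (bx w p p))"
  proof (intro allI impI)
    fix p assume h: "le_en p (bm w)"
    then obtain j where j: "p \<le> dG (lseq w j)" using le_bm_iff[OF w] by blast
    show "bx w p p = iG (rG (bx w p p))"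
      using bx_eq[OF w order_refl j] seg_id[OF lseq_mor[OF w, THEN conjunct1] j] by simp
  qed
  have C: "\<forall>p q t. p \<le> q \<and> q \<le> t \<and> le_en t (bm w) \<longrightarrow>
         sG (bx w p q) = rG (bx w q t) \<and> cG (bx w p q) (bx w q t) = bx w p t"
  proof (intro allI impI)
    fix p q t assume h: "p \<le> q \<and> q \<le> t \<and> le_en t (bm w)"
    then obtain j where j: "t \<le> dG (lseq w j)" using le_bm_iff[OF w] by blast
    have qj: "q \<le> dG (lseq w j)" using h j order_trans by blast
    have pt: "p \<le> t" using h order_trans by blast
    show "sG (bx w p q) = rG (bx w q t) \<and> cG (bx w p q) (bx w q t) = bx w p t"
      using bx_eq[OF w _ qj, of p] bx_eq[OF w _ j, of q] bx_eq[OF w pt j]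
        seg_cp[OF lseq_mor[OF w, THEN conjunct1], of p q t] h j by simp
  qed
  show ?thesis unfolding is_gm_def using A B C by simp
qed

lemma seg_rg0: "mu \<in> MG \<Longrightarrow> q \<le> dG mu \<Longrightarrow> rG (seg G mu 0 q) = rG mu"
proof -
  assume a: "mu \<in> MG" "q \<le> dG mu"
  obtain al be where h: "al \<in> MG" "seg G mu 0 q \<in> MG" "be \<in> MG" "sG al = rG (seg G mu 0 q)"
     "sG (seg G mu 0 q) = rG be" "cG (cG al (seg G mu 0 q)) be = mu" "dG al = 0"
    using seg_exists[OF a(1) zero_le_vec a(2)] by blast
  have "al = iG (rG al)" using deg0 h by simp
  then have "sG al = rG al" using id_props mor_rs h(1) by metis
  moreover have "rG mu = rG al"
    using h cp_rg[OF h(1,2,4)] cp_rg[OF cp_mor[OF h(1,2,4)] h(3)] cp_sr[OF h(1,2,4)] by simp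
  ultimately show ?thesis using h(4) by simp
qed

lemma bx_v0: "w \<in> OG \<Longrightarrow> vtx G (bx w) 0 = w"
proof -
  assume w: "w \<in> OG"
  have "dG (lseq w 0) = 0" using id_props[OF w] by (simp add: lseq_def)
  then have "bx w 0 0 = seg G (lseq w 0) 0 0" using bx_eq[OF w order_refl] by simp
  then show ?thesis unfolding vtx_def using seg_rg0[OF lseq_mor[OF w, THEN conjunct1], of 0] lseq_mor[OF w]
    by (simp add: zero_le_vec)
qed

lemma bx_bp: "w \<in> OG \<Longrightarrow> is_bp G (bm w, bx w)"
proof -
  assume w: "w \<in> OG"
  have g: "is_gm G (bm w, bx w)" using bx_gm[OF w] .
  define jf where "jf = (\<lambda>i. SOME j. enat (dG (lseq w j) i) = bm w i)"
  have jf: "\<And>i. bm w i \<noteq> \<infinity> \<Longrightarrow> enat (dG (lseq w (jf i)) i) = bm w i"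
  proof -
    fix i assume f: "bm w i \<noteq> \<infinity>"
    then obtain N where N: "bm w i = enat N" by auto
    have "enat N \<le> (SUP j. enat (dG (lseq w j) i))" using N unfolding bm_def by (metis order_refl)
    then obtain j where j: "N \<le> dG (lseq w j) i" using coord_reach[of N "\<lambda>j. dG (lseq w j) i"] by blast
    have "enat (dG (lseq w j) i) \<le> bm w i" unfolding bm_def by (rule SUP_upper) simp
    then have "enat (dG (lseq w j) i) = bm w i" using j N by simp
    then show "enat (dG (lseq w (jf i)) i) = bm w i" unfolding jf_def by (rule someI)
  qed
  define J where "J = Max (range jf)"
  have Jge: "\<And>i. jf i \<le> J" unfolding J_def by (rule Max_ge) auto
  have stab: "\<And>i j. bm w i \<noteq> \<infinity> \<Longrightarrow> J \<le> j \<Longrightarrow> enat (dG (lseq w j) i) = bm w i"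
  proof -
    fix i j assume f: "bm w i \<noteq> \<infinity>" "J \<le> j"
    have "dG (lseq w (jf i)) i \<le> dG (lseq w j) i" using lseq_mono[OF w] Jge[of i] f(2) le_funD order_trans by metis
    moreover have "enat (dG (lseq w j) i) \<le> bm w i" unfolding bm_def by (rule SUP_upper) simp
    ultimately show "enat (dG (lseq w j) i) = bm w i" using jf[OF f(1)] by (metis antisym enat_ord_simps(1))
  qed
  define nx where "nx = dG (lseq w (Suc J))"
  have nxm: "le_en nx (bm w)" unfolding nx_def using le_bm_iff[OF w] by blast
  have main: "\<forall>p i. nx \<le> p \<and> le_en p (bm w) \<and> enat (p i) = bm w i \<longrightarrow>
            \<not> (\<exists>l\<in>MG. rG l = vtx G (bx w) p \<and> dG l = e_vec i)"
  proof (intro allI impI notI)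
    fix p i assume h: "nx \<le> p \<and> le_en p (bm w) \<and> enat (p i) = bm w i"
      and ex: "\<exists>l\<in>MG. rG l = vtx G (bx w) p \<and> dG l = e_vec i"
    obtain e where e: "e \<in> MG" "rG e = vtx G (bx w) p" "dG e = e_vec i" using ex by blast
    have fin: "bm w i \<noteq> \<infinity>" using h by (metis enat.distinct(1))
    have lJ: "lseq w J \<in> MG" using lseq_mor[OF w] by blast
    obtain l' where l': "extends (lseq w J) l'" "extends (ext1 l' i) (lseq w (Suc J))"
      using foldl_ext[OF lJ] Lk_set unfolding lseq_Suc stepF_def by blast
    have l'm: "l' \<in> MG" using ext_mor[OF l'(1)] by simp
    have e1: "extends l' (ext1 l' i)" using ext1_props[OF l'm] by simp
    have d1: "dG (lseq w J) \<le> dG l'" "dG l' \<le> dG (ext1 l' i)" "dG (ext1 l' i) \<le> dG (lseq w (Suc J))"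
      using ext_mor[OF l'(1)] ext_mor[OF e1] ext_mor[OF l'(2)] by auto
    have "enat (dG (lseq w J) i) = enat (dG (lseq w (Suc J)) i)" using stab[OF fin] by simp
    then have eqJ: "dG (lseq w J) i = dG (lseq w (Suc J)) i" by simp
    have "dG (lseq w J) i \<le> dG l' i" "dG l' i \<le> dG (ext1 l' i) i" "dG (ext1 l' i) i \<le> dG (lseq w (Suc J)) i"
      using le_funD[OF d1(1)] le_funD[OF d1(2)] le_funD[OF d1(3)] by auto
    then have "dG (ext1 l' i) i = dG l' i" using eqJ by linarith
    then have noe: "\<not> (\<exists>e\<in>MG. rG e = sG l' \<and> dG e = e_vec i)" using ext1_props[OF l'm] by blast
    obtain j0 where j0: "p \<le> dG (lseq w j0)" using h le_bm_iff[OF w] by blast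
    define j where "j = max j0 (Suc J)"
    have pj: "p \<le> dG (lseq w j)" using j0 lseq_mono[OF w, of j0 j] unfolding j_def by (meson max.cobounded1 order_trans)
    have el: "extends l' (lseq w j)"
      using ext_trans[OF e1 ext_trans[OF l'(2) lseq_ext[OF w, of "Suc J" j]]] unfolding j_def by simp
    define D where "D = dG l'"
    have Dp: "D \<le> p" using d1 h unfolding D_def nx_def by (meson order_trans)
    have pm: "le_en p (bm w)" using h by simp
    have Dm: "le_en D (bm w)" using le_en_mono[OF Dp pm] .
    have pi: "bx w D p \<in> MG" "rG (bx w D p) = vtx G (bx w) D" "sG (bx w D p) = vtx G (bx w) p" "dG (bx w D p) = p - D"
      using gm_mor[OF g Dp pm] gm_rg[OF g Dp pm] gm_sr[OF g Dp pm] gm_dg[OF g Dp pm] by auto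
    have "bx w 0 D = seg G (lseq w j) 0 D" using bx_eq[OF w zero_le_vec] Dp pj order_trans by metis
    also have "\<dots> = seg G l' 0 D" using ext_seg[OF el zero_le_vec] D_def by simp
    also have "\<dots> = l'" using seg_whole[OF l'm] D_def by simp
    finally have "sG l' = vtx G (bx w) D" using gm_sr[OF g zero_le_vec Dm] by simp
    then have rp: "rG (bx w D p) = sG l'" using pi by simp
    have se: "sG (bx w D p) = rG e" using pi e by simp
    have rho: "cG (bx w D p) e \<in> MG" "rG (cG (bx w D p) e) = sG l'" "dG (cG (bx w D p) e) = e_vec i + (p - D)"
      using cp_mor[OF pi(1) e(1) se] cp_rg[OF pi(1) e(1) se] cp_dg[OF pi(1) e(1) se] rp pi e by (auto simp: add.commute)
    obtain g1 g2 where gg: "g1 \<in> MG" "g2 \<in> MG" "sG g1 = rG g2" "cG g1 g2 = cG (bx w D p) e" "dG g1 = e_vec i"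
      using fact_ex[OF rho(1) rho(3)] by blast
    have "rG g1 = sG l'" using cp_rg[OF gg(1-3)] gg(4) rho(2) by simp
    then show False using noe gg by blast
  qed
  show ?thesis unfolding is_bp_def using g nxm main by auto
qed

lemma bp_exists: "w \<in> OG \<Longrightarrow> \<exists>m x. is_bp G (m,x) \<and> vtx G x 0 = w"
  using bx_bp bx_v0 by blast

lemma E_nosrc:
  assumes v: "v \<in> kobj E"
  shows "\<exists>l\<in>kmor E. krg E l = v \<and> kdg E l = n"
proof (rule E_obj_cases[OF v])
  fix w assume h: "v = Inl w" "w \<in> OG"
  show ?thesis
  proof (cases "\<exists>la\<in>MG. rG la = w \<and> dG la = n")
    case True
    then obtain la where la: "la \<in> MG" "rG la = w" "dG la = n" by blast
    then show ?thesis using h E_mor E_rg_l E_dg_l by (intro bexI[of _ "Inl la"]) auto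
  next
    case False
    obtain m x where mx: "is_bp G (m,x)" "vtx G x 0 = w" using bp_exists[OF h(2)] by blast
    have gm: "is_gm G (m,x)" using mx unfolding is_bp_def by simp
    have nm: "\<not> le_en n m"
    proof
      assume nm: "le_en n m"
      have "x 0 n \<in> MG" "rG (x 0 n) = w" "dG (x 0 n) = n"
        using gm_mor[OF gm zero_le_vec nm] gm_rg[OF gm zero_le_vec nm] gm_dg[OF gm zero_le_vec nm] mx by auto
      then show False using False by blast
    qed
    have u: "((m,x),0,n) \<in> P_set G" using mx nm unfolding P_set_def by (simp add: zero_le_vec)
    have l: "Inr (Pcls G ((m,x),0,n)) \<in> kmor E" "absM (Inr (Pcls G ((m,x),0,n))) = Inr (pinv ((m,x),0,n))"
      using Pcls_mor[OF u] by auto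
    have m0: "meet_en 0 m = 0" by (simp add: fun_eq_iff meet_apply meetc0)
    have "absV (krg E (Inr (Pcls G ((m,x),0,n)))) = absV (Inl w)"
      using abs_rg_E[OF l(1)] l(2) pset_facts(6)[OF u] m0 mx by (simp add: pinv_simp)
    then have "krg E (Inr (Pcls G ((m,x),0,n))) = v"
      using absV_inj[OF E_rg_obj[OF l(1)]] v h by simp
    moreover have "kdg E (Inr (Pcls G ((m,x),0,n))) = n" using abs_dg_E[OF l(1)] l(2) by (simp add: pinv_simp)
    ultimately show ?thesis using l(1) by blast
  qed
next
  fix c m x a assume h: "v = Inr c" "c \<in> Vtilde G" "rep c = ((m,x),a)" "((m,x),a) \<in> V_set G"
  have d: "is_gm G (m,x)" "is_bp G (m,x)" "\<not> le_en a m" using vset_D[OF h(4)] by auto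
  have an: "a \<le> a + n" by (simp add: le_fun_def)
  have nm: "\<not> le_en (a + n) m" using le_en_mono[OF an] d(3) by blast
  have u: "((m,x),a,a+n) \<in> P_set G" using d nm an unfolding P_set_def by simp
  have l: "Inr (Pcls G ((m,x),a,a+n)) \<in> kmor E" "absM (Inr (Pcls G ((m,x),a,a+n))) = Inr (pinv ((m,x),a,a+n))"
    using Pcls_mor[OF u] by auto
  have nz: "a - meet_en a m \<noteq> 0" using d(3) le_en_iff_diff[of a m] by simp
  have "absV (krg E (Inr (Pcls G ((m,x),a,a+n)))) = absV v"
    using abs_rg_E[OF l(1)] l(2) pset_facts(6)[OF u] nz h by (simp add: pinv_simp vinv_simp)
  then have "krg E (Inr (Pcls G ((m,x),a,a+n))) = v"
    using absV_inj[OF E_rg_obj[OF l(1)] v] by simp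
  moreover have "kdg E (Inr (Pcls G ((m,x),a,a+n))) = n" using abs_dg_E[OF l(1)] l(2) by (simp add: pinv_simp)
  ultimately show ?thesis using l(1) by blast
qed

end

theorem theorem3p24:
  fixes G :: "('v, 'a, 'k::finite) kgraph"
  assumes "k_graph G"
  shows "k_graph (ext G) \<and>
         (\<forall>v \<in> kobj (ext G). \<forall>n :: 'k \<Rightarrow> nat.
            \<exists>l \<in> kmor (ext G). krg (ext G) l = v \<and> kdg (ext G) l = n)"
proof -
  interpret kgr G by (rule kgr.intro) (rule assms)
  show ?thesis using E_kgraph E_nosrc by blast
qed

end
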